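(* 1. Assume that there exist fixed positive constants $k,K$ such that $\sup_{\Vert \Delta\Vert_{2}=1} \Vert \langle \Delta, \phi(Z) \rangle \Vert_{\psi_{2}}\leq K$, $k\leq \lambda_{min}(\Sigma_{1})\leq\lambda_{max}(\Sigma_{1})\leq K$, where $\Sigma_1=E\{\phi(Z)\phi(Z)^{\top}\}$, and that the link $\varphi$ satisfies $$\vert \varphi(u) -\varphi(v)\vert \leq K\exp\{ K ( \vert u\vert+\vert v \vert ) \} \vert u -v\vert \quad \text{for all } u,v \in\mathbb{R}.$$ Take $l \in \{1,2\}$, $\alpha>1/l$ and $M>0$. Let $\overline{l}=2$ if $l=1$ and $\overline{l}=1$ if $l=2$. Consider the class $\mathcal{W}_{n}(\phi,t,\alpha,l,M,\varphi)$ of functions $c(Z)=\varphi(\langle\theta,\phi(Z)\rangle)$ with $\theta\in\mathbb{R}^p$ satisfying $\max_{j\leq p} j^{\alpha}|\theta_{(j)}|\leq t(n)$ and $\Vert\theta\Vert_2\leq M$, for a sequence $t(n)$ satisfying $t(n)^{1/\alpha}(\log(p)/n)^{1-1/(l\alpha)}\to 0$ and $t(n)^{1/\alpha}(n/\log(p))^{1/(l\alpha)}\leq p$. Let $$s=t(n)^{1/\alpha} \left(\frac{n}{\log(p)}\right)^{1/(l\alpha)}.$$ Then $\mathcal{W}_{n}(\phi,t,\alpha,l,M,\varphi)$ is contained in the AGLS class $\mathcal{G}_{n}(\phi, s, \overline{l}, \varphi)$. Moreover, for each $q\in(0,2)$, the class $\mathcal{N}_{n}(\phi, t,q,M,\varphi)$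 of functions $c(Z)=\varphi(\langle\theta,\phi(Z)\rangle)$ with $\sum_{j=1}^p|\theta_j|^q\leq t(n)$ and $\Vert\theta\Vert_2\leq M$, for a sequence $t(n)$ satisfying $t(n)(\log(p)/n)^{1-q/2}\to 0$ and $t(n)(n/\log(p))^{q/2}\leq p$, is contained in $\mathcal{W}_{n}(\phi,t^{1/q}, 1/q,2,M, \varphi)$. 2. Assume that there exists a fixed positive constant $K$ such that the density of $Z$ satisfies $f_{Z}(z)\leq K$ for all $z$, and that $\{ \phi_{j} \}_{j\in\mathbb{N}}$ is an orthonormal basis of $L_{2}[0,1]^{d}$, for a fixed $d$. Take $l \in \{1,2\}$ and $\alpha>1/l$. Let $\overline{l}=2$ if $l=1$ and $\overline{l}=1$ if $l=2$. Consider the class $\mathcal{S}_{n}(\phi,t,\alpha,l)$ of functions $c$ such that there exist $p=p(n)$ and a permutation $\{\phi_{\pi(j)}\}$ of the first $p$ elements of the basis with $$c(Z)=\sum_{j=1}^{p}\theta_{j}\phi_{\pi(j)}(Z)+\sum_{j=p+1}^{\infty}\theta_{j}\phi_{j}(Z),$$ where $|\theta_j|j^{\alpha}\leq t(n)$ for all $j$ and $t(n)^{1/\alpha}(\log(p)/n)^{1-1/(l\alpha)}\to 0$ and $t(n)^{1/\alpha}(n/\log(p))^{1/(l\alpha)}\leq p$. Let $$s=t(n)^{1/\alpha} \left(\frac{n}{\log(p)}\right)^{1/(l\alpha)}.$$ Then $\mathcal{S}_{n}(\phi,t,\alpha,l)$ is contained in the AGLS class $\mathcal{G}_{n}(\phi^{n},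 s, \overline{l}, \mathrm{id})$ with $\phi^{n}=(\phi_{1},\dots,\phi_{p(n)})$.
   Context: For a random variable $W$, $\Vert W\Vert_{\psi_2}=\sup_{k\in\mathbb{N}} (E|W|^k)^{1/k}/\sqrt{k}$. For $\theta\in\mathbb{R}^p$, $|\theta_{(p)}|\leq\dots\leq|\theta_{(1)}|$ are the sorted absolute values of its entries and $\Vert\theta\Vert_0$ is the number of nonzero entries. The approximately generalized linear-sparse (AGLS) class $\mathcal{G}_n(\phi,s,j,\varphi)$, for an $\mathbb{R}^p$-valued function $\phi(Z)$, integer $s$, $j\in\{1,2\}$ and link $\varphi$, consists of functions $c(Z)$ such that there exist $\theta^*\in\mathbb{R}^p$ with $\Vert\theta^*\Vert_0\leq s$ and a function $r(Z)$ with $c(Z)=\varphi(\langle\theta^*,\phi(Z)\rangle)+r(Z)$ and $E[r(Z)^2]\leq K(s\log(p)/n)^j$ for a fixed constant $K$. Here $p=p(n)$ and all quantities may depend on $n$; $\mathrm{id}$ denotes the identity link. *)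

theory Defs
  imports "HOL-Probability.Probability"
begin

text \<open>Vectors in R^p are represented as functions nat => real, using coordinates 0..<p
  (coordinates beyond p are set to 0). The paper's 1-based index j corresponds to j-1 here.\<close>

definition inner_p :: "nat \<Rightarrow> (nat \<Rightarrow> real) \<Rightarrow> (nat \<Rightarrow> real) \<Rightarrow> real" where
  "inner_p p a b = (\<Sum>i<p. a i * b i)"

definition norm2_p :: "nat \<Rightarrow> (nat \<Rightarrow> real) \<Rightarrow> real" where
  "norm2_p p a = sqrt (\<Sum>i<p. (a i)\<^sup>2)"

definition l0_p :: "nat \<Rightarrow> (nat \<Rightarrow> real) \<Rightarrow> nat" where
  "l0_p p a = card {i. i < p \<and> a i \<noteq> 0}"

text \<open>sorted_abs p a j = |a_(j)|, the j-th largest absolute value (1 <= j <= p).\<close>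
definition sorted_abs :: "nat \<Rightarrow> (nat \<Rightarrow> real) \<Rightarrow> nat \<Rightarrow> real" where
  "sorted_abs p a j = rev (sort (map (\<lambda>i. \<bar>a i\<bar>) [0..<p])) ! (j - 1)"

text \<open>psi_2 norm bounded by C: sup over k in N (k >= 1) of (E|W|^k)^(1/k)/sqrt k <= C.\<close>
definition psi2_le :: "'z measure \<Rightarrow> ('z \<Rightarrow> real) \<Rightarrow> real \<Rightarrow> bool" where
  "psi2_le M W C \<longleftrightarrow> W \<in> borel_measurable M \<and>
     (\<forall>k::nat. k \<ge> 1 \<longrightarrow> integrable M (\<lambda>z. \<bar>W z\<bar> ^ k) \<and>
        (\<integral>z. \<bar>W z\<bar> ^ k \<partial>M) powr (1 / real k) \<le> C * sqrt (real k))"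

definition Sigma1 :: "'z measure \<Rightarrow> ('z \<Rightarrow> nat \<Rightarrow> real) \<Rightarrow> nat \<Rightarrow> nat \<Rightarrow> real" where
  "Sigma1 M \<phi> i j = (\<integral>z. \<phi> z i * \<phi> z j \<partial>M)"

definition is_eigenvalue_p :: "nat \<Rightarrow> (nat \<Rightarrow> nat \<Rightarrow> real) \<Rightarrow> real \<Rightarrow> bool" where
  "is_eigenvalue_p p A lam \<longleftrightarrow>
     (\<exists>v. (\<exists>i<p. v i \<noteq> 0) \<and> (\<forall>i<p. (\<Sum>j<p. A i j * v j) = lam * v i))"

definition AGLS :: "'z measure \<Rightarrow> ('z \<Rightarrow> nat \<Rightarrow> real) \<Rightarrow> nat \<Rightarrow> nat \<Rightarrow> real \<Rightarrow> nat
     \<Rightarrow> (real \<Rightarrow> real) \<Rightarrow> real \<Rightarrow> ('z \<Rightarrow> real) \<Rightarrow> bool" where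
  "AGLS M \<phi> p n s j link K c \<longleftrightarrow>
     (\<exists>\<theta> r. (\<forall>i\<ge>p. \<theta> i = 0) \<and> real (l0_p p \<theta>) \<le> s \<and>
        (\<forall>z\<in>space M. c z = link (inner_p p \<theta> (\<phi> z)) + r z) \<and>
        r \<in> borel_measurable M \<and> integrable M (\<lambda>z. (r z)\<^sup>2) \<and>
        (\<integral>z. (r z)\<^sup>2 \<partial>M) \<le> K * (s * ln (real p) / real n) ^ j)"

definition Wclass :: "'z measure \<Rightarrow> ('z \<Rightarrow> nat \<Rightarrow> real) \<Rightarrow> nat \<Rightarrow> real \<Rightarrow> real \<Rightarrow> real
     \<Rightarrow> (real \<Rightarrow> real) \<Rightarrow> ('z \<Rightarrow> real) \<Rightarrow> bool" where
  "Wclass M \<phi> p t \<alpha> Mb link c \<longleftrightarrow>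
     (\<exists>\<theta>. (\<forall>i\<ge>p. \<theta> i = 0) \<and>
        (\<forall>j\<in>{1..p}. real j powr \<alpha> * sorted_abs p \<theta> j \<le> t) \<and>
        norm2_p p \<theta> \<le> Mb \<and>
        (\<forall>z\<in>space M. c z = link (inner_p p \<theta> (\<phi> z))))"

definition Nclass :: "'z measure \<Rightarrow> ('z \<Rightarrow> nat \<Rightarrow> real) \<Rightarrow> nat \<Rightarrow> real \<Rightarrow> real \<Rightarrow> real
     \<Rightarrow> (real \<Rightarrow> real) \<Rightarrow> ('z \<Rightarrow> real) \<Rightarrow> bool" where
  "Nclass M \<phi> p t q Mb link c \<longleftrightarrow>
     (\<exists>\<theta>. (\<forall>i\<ge>p. \<theta> i = 0) \<and>
        (\<Sum>j<p. \<bar>\<theta> j\<bar> powr q) \<le> t \<and>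
        norm2_p p \<theta> \<le> Mb \<and>
        (\<forall>z\<in>space M. c z = link (inner_p p \<theta> (\<phi> z))))"

definition unit_cube :: "(real^'d) set" where
  "unit_cube = {x. \<forall>i. 0 \<le> x $ i \<and> x $ i \<le> 1}"

definition L2cube :: "(real^'d \<Rightarrow> real) \<Rightarrow> bool" where
  "L2cube g \<longleftrightarrow> g \<in> borel_measurable (lebesgue_on unit_cube) \<and>
     integrable (lebesgue_on unit_cube) (\<lambda>x. (g x)\<^sup>2)"

definition L2inner :: "(real^'d \<Rightarrow> real) \<Rightarrow> (real^'d \<Rightarrow> real) \<Rightarrow> real" where
  "L2inner g h = (\<integral>x. g x * h x \<partial>lebesgue_on unit_cube)"

definition L2_onb :: "(nat \<Rightarrow> real^'d \<Rightarrow> real) \<Rightarrow> bool" where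
  "L2_onb \<phi> \<longleftrightarrow> (\<forall>j. L2cube (\<phi> j)) \<and>
     (\<forall>i j. L2inner (\<phi> i) (\<phi> j) = (if i = j then 1 else 0)) \<and>
     (\<forall>g. L2cube g \<longrightarrow> (\<forall>\<epsilon>>0. \<exists>N a.
        (\<integral>x. (g x - (\<Sum>j<N. a j * \<phi> j x))\<^sup>2 \<partial>lebesgue_on unit_cube) < \<epsilon>))"

text \<open>Class S_n(phi, t, alpha, l) for given p = p(n) and t = t(n); the paper's
  1-based index j corresponds to j-1 here, so the weight j^alpha becomes (j+1)^alpha.
  The infinite series is understood as a limit in L_2[0,1]^d.\<close>
definition Sclass :: "(nat \<Rightarrow> real^'d \<Rightarrow> real) \<Rightarrow> nat \<Rightarrow> real \<Rightarrow> real
     \<Rightarrow> (real^'d \<Rightarrow> real) \<Rightarrow> bool" where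
  "Sclass \<phi> p t \<alpha> c \<longleftrightarrow> L2cube c \<and>
     (\<exists>\<theta> \<pi>. bij_betw \<pi> {..<p} {..<p} \<and>
        (\<forall>j. \<bar>\<theta> j\<bar> * real (Suc j) powr \<alpha> \<le> t) \<and>
        (\<lambda>N. \<integral>x. (c x - (\<Sum>j<p. \<theta> j * \<phi> (\<pi> j) x) - (\<Sum>j\<in>{p..<N}. \<theta> j * \<phi> j x))\<^sup>2
              \<partial>lebesgue_on unit_cube) \<longlonglongrightarrow> 0)"

end

theory Submission
  imports Defs
begin


lemma tail_step:
  fixes \<beta> x :: real
  assumes b: "\<beta> > 1" and x: "x \<ge> 1"
  shows "(\<beta> - 1) * (x + 1) powr (-\<beta>) \<le> x powr (1 - \<beta>) - (x + 1) powr (1 - \<beta>)"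
proof -
  have "\<exists>z>x. z < x + 1 \<and> (x+1) powr (1-\<beta>) - x powr (1-\<beta>) = ((x+1) - x) * ((1-\<beta>) * z powr (-\<beta>))"
  proof (rule MVT2)
    show "x < x + 1" by simp
    fix y assume "x \<le> y" "y \<le> x + 1"
    then have y: "y > 0" using x by simp
    have "((\<lambda>y. y powr (1-\<beta>)) has_real_derivative (1-\<beta>) * y powr (1 - \<beta> - 1)) (at y)"
      using y by (rule has_real_derivative_powr)
    moreover have "y powr (1 - \<beta> - 1) = y powr (-\<beta>)" by simp
    ultimately show "((\<lambda>y. y powr (1-\<beta>)) has_real_derivative (1-\<beta>) * y powr (-\<beta>)) (at y)" by simp
  qed
  then obtain z where z: "z > x" "z < x + 1" and eq: "(x+1) powr (1-\<beta>) - x powr (1-\<beta>) = (1-\<beta>) * z powr (-\<beta>)"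
    by auto
  have "(x+1) powr (-\<beta>) \<le> z powr (-\<beta>)"
    using z x b by (intro powr_mono2') auto
  then have "(\<beta> - 1) * (x+1) powr (-\<beta>) \<le> (\<beta> - 1) * z powr (-\<beta>)"
    using b by (intro mult_left_mono) auto
  then show ?thesis using eq by (simp add: algebra_simps)
qed

lemma tail_sum:
  fixes \<beta> :: real
  assumes b: "\<beta> > 1" and N: "1 \<le> N" and NM: "N \<le> M"
  shows "(\<Sum>i\<in>{N..<M}. (real i + 1) powr (-\<beta>)) \<le> (real N powr (1-\<beta>) - real M powr (1-\<beta>)) / (\<beta> - 1)"
  using NM
proof (induction M rule: dec_induct)
  case base then show ?case by simp
next
  case (step M)
  have "(\<beta> - 1) * (real M + 1) powr (-\<beta>) \<le> real M powr (1 - \<beta>) - (real M + 1) powr (1 - \<beta>)"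
    using step(1) N b by (intro tail_step) auto
  then have "(real M + 1) powr (-\<beta>) \<le> (real M powr (1 - \<beta>) - (real M + 1) powr (1 - \<beta>)) / (\<beta> - 1)"
    using b by (simp add: field_simps)
  then show ?case using step(1,2,3) b
    by (simp add: add_divide_distrib diff_divide_distrib[symmetric] field_simps)
qed

lemma tail_sum2:
  fixes \<beta> :: real
  assumes b: "\<beta> > 1"
  shows "(\<Sum>i\<in>{N..<M}. (real i + 1) powr (-\<beta>)) \<le> (real N + 1) powr (1-\<beta>) * (\<beta> / (\<beta> - 1))"
proof (cases "N < M")
  case False
  then have "{N..<M} = {}" by auto
  then show ?thesis using b by simp
next
  case True
  have split: "{N..<M} = insert N {Suc N..<M}" using True by auto
  have "(\<Sum>i\<in>{N..<M}. (real i + 1) powr (-\<beta>)) = (real N + 1) powr (-\<beta>) + (\<Sum>i\<in>{Suc N..<M}. (real i + 1) powr (-\<beta>))"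
    unfolding split by simp
  also have "(\<Sum>i\<in>{Suc N..<M}. (real i + 1) powr (-\<beta>)) \<le> (real (Suc N) powr (1-\<beta>) - real M powr (1-\<beta>)) / (\<beta> - 1)"
    using True b by (intro tail_sum) auto
  also have "\<dots> \<le> (real N + 1) powr (1-\<beta>) / (\<beta> - 1)"
    using b by (intro divide_right_mono) (auto simp: add.commute)
  also have "(real N + 1) powr (-\<beta>) \<le> (real N + 1) powr (1-\<beta>)"
    by (intro powr_mono) auto
  finally have "(\<Sum>i\<in>{N..<M}. (real i + 1) powr (-\<beta>)) \<le> (real N + 1) powr (1-\<beta>) * (1 + 1 / (\<beta> - 1))"
    by (simp add: algebra_simps)
  also have "1 + 1 / (\<beta> - 1) = \<beta> / (\<beta> - 1)" using b by (simp add: field_simps)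
  finally show ?thesis .
qed

lemma expo_bound:
  fixes t \<alpha> s L :: real and l m :: nat
  assumes t: "t \<ge> 0" and l: "l \<in> {1,2}" and a: "\<alpha> > 1 / real l" and L: "L > 0"
    and s: "s = t powr (1/\<alpha>) * (1 / L) powr (1 / (real l * \<alpha>))"
    and m: "s < real m + 1"
  shows "t\<^sup>2 * (real m + 1) powr (1 - 2*\<alpha>) \<le> (s * L) ^ (if l = 1 then 2 else 1)"
proof (cases "t = 0")
  case True then show ?thesis using L s by simp
next
  case False
  then have tp: "t > 0" using t by simp
  have ap: "\<alpha> > 0" using a l by (auto simp: field_simps)
  have sp: "s > 0" using s tp L by simp
  show ?thesis
  proof (cases "l = 1")
    case True
    then have a1: "\<alpha> > 1" using a by simp
    have "s powr \<alpha> = t * (1/L)"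
      using s True ap tp L by (simp add: powr_mult powr_powr)
    then have s2a: "s powr (2*\<alpha>) = t\<^sup>2 / L\<^sup>2"
      by (metis (no_types, lifting) mult.commute power2_eq_square powr_add mult_2 times_divide_eq_right mult_1_right divide_divide_eq_left power_mult_distrib times_divide_times_eq)
    have "(real m + 1) powr (1 - 2*\<alpha>) \<le> (real m + 1) powr (2 - 2*\<alpha>)"
      by (intro powr_mono) auto
    also have "\<dots> \<le> s powr (2 - 2*\<alpha>)"
      using sp m a1 by (intro powr_mono2') auto
    also have "\<dots> = s powr 2 / s powr (2*\<alpha>)" by (simp add: powr_diff)
    also have "\<dots> = s\<^sup>2 * L\<^sup>2 / t\<^sup>2" using s2a sp tp L by (simp add: powr_numeral)
    finally have "(real m + 1) powr (1 - 2*\<alpha>) \<le> s\<^sup>2 * L\<^sup>2 / t\<^sup>2" .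
    then have "t\<^sup>2 * (real m + 1) powr (1 - 2*\<alpha>) \<le> t\<^sup>2 * (s\<^sup>2 * L\<^sup>2 / t\<^sup>2)"
      by (intro mult_left_mono) auto
    also have "\<dots> = (s * L)^2" using tp by (simp add: power_mult_distrib)
    finally show ?thesis using True by simp
  next
    case False
    then have l2: "l = 2" using l by simp
    then have a1: "2*\<alpha> > 1" using a by (simp add: field_simps)
    have "s powr (2*\<alpha>) = t powr 2 * (1/L)"
      using s l2 ap tp L by (simp add: powr_mult powr_powr)
    then have s2a: "s powr (2*\<alpha>) = t\<^sup>2 / L" using tp by (simp add: powr_numeral)
    have "(real m + 1) powr (1 - 2*\<alpha>) \<le> s powr (1 - 2*\<alpha>)"
      using sp m a1 by (intro powr_mono2') auto
    also have "\<dots> = s powr 1 / s powr (2*\<alpha>)" by (simp add: powr_diff)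
    also have "\<dots> = s * L / t\<^sup>2" using s2a sp tp L by simp
    finally have "(real m + 1) powr (1 - 2*\<alpha>) \<le> s * L / t\<^sup>2" .
    then have "t\<^sup>2 * (real m + 1) powr (1 - 2*\<alpha>) \<le> t\<^sup>2 * (s * L / t\<^sup>2)"
      by (intro mult_left_mono) auto
    also have "\<dots> = s * L" using tp by simp
    finally show ?thesis using False by simp
  qed
qed


definition SL :: "nat \<Rightarrow> (nat \<Rightarrow> real) \<Rightarrow> real list" where
  "SL p a = rev (sort (map (\<lambda>i. \<bar>a i\<bar>) [0..<p]))"

lemma sorted_abs_SL: "sorted_abs p a j = SL p a ! (j - 1)"
  unfolding sorted_abs_def SL_def by simp

lemma SL_len: "length (SL p a) = p"
  unfolding SL_def by simp

lemma SL_mset: "mset (SL p a) = mset (map (\<lambda>i. \<bar>a i\<bar>) [0..<p])"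
  unfolding SL_def by simp

lemma SL_mono: assumes "i \<le> k" "k < p" shows "SL p a ! k \<le> SL p a ! i"
proof (cases "i = k")
  case True then show ?thesis by simp
next
  case False
  have "sorted_wrt (\<ge>) (SL p a)"
  proof -
    have "sorted (sort (map (\<lambda>i. \<bar>a i\<bar>) [0..<p]))" by simp
    then show ?thesis unfolding SL_def sorted_wrt_rev by simp
  qed
  then show ?thesis using assms False SL_len[of p a] by (metis le_neq_implies_less sorted_wrt_nth_less)
qed

lemma SL_nonneg: assumes "i < p" shows "SL p a ! i \<ge> 0"
proof -
  have "SL p a ! i \<in> set (SL p a)" using assms SL_len[of p a] by simp
  also have "set (SL p a) = (\<lambda>i. \<bar>a i\<bar>) ` {0..<p}" unfolding SL_def by simp
  finally show ?thesis by auto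
qed

lemma SL_sum: "(\<Sum>i<p. g (SL p a ! i)) = (\<Sum>i<p. g \<bar>a i\<bar>)"
proof -
  have "(\<Sum>i<p. g (SL p a ! i)) = sum_list (map g (SL p a))"
    by (simp add: sum_list_sum_nth SL_len atLeast0LessThan)
  also have "\<dots> = sum_mset (image_mset g (mset (SL p a)))" by (metis mset_map sum_mset_sum_list)
  also have "\<dots> = sum_list (map g (map (\<lambda>i. \<bar>a i\<bar>) [0..<p]))" unfolding SL_mset by (metis mset_map sum_mset_sum_list)
  also have "\<dots> = (\<Sum>i<p. g \<bar>a i\<bar>)" by (simp add: sum_list_sum_nth atLeast0LessThan)
  finally show ?thesis .
qed

lemma SL_card: "card {i. i < p \<and> P (SL p a ! i)} = card {i. i < p \<and> P \<bar>a i\<bar>}"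
proof -
  have "card {i. i < p \<and> P (SL p a ! i)} = length (filter P (SL p a))"
    by (simp add: length_filter_conv_card SL_len)
  also have "\<dots> = size (filter_mset P (mset (SL p a)))" by (metis mset_filter size_mset)
  also have "\<dots> = length (filter P (map (\<lambda>i. \<bar>a i\<bar>) [0..<p]))" unfolding SL_mset by (metis mset_filter size_mset)
  also have "\<dots> = card {i. i < p \<and> P \<bar>a i\<bar>}" unfolding length_filter_conv_card
    by (intro arg_cong[where f=card] Collect_cong) auto
  finally show ?thesis .
qed

lemma part2_core:
  fixes q t :: real
  assumes q: "q > 0" and sum: "(\<Sum>j<p. \<bar>\<theta> j\<bar> powr q) \<le> t" and j: "j \<in> {1..p}"
  shows "real j powr (1/q) * sorted_abs p \<theta> j \<le> t powr (1/q)"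
proof -
  define x where "x = SL p \<theta> ! (j - 1)"
  have x0: "x \<ge> 0" unfolding x_def using j by (intro SL_nonneg) auto
  have "(\<Sum>i<j. x powr q) \<le> (\<Sum>i<j. SL p \<theta> ! i powr q)"
  proof (intro sum_mono)
    fix i assume "i \<in> {..<j}"
    then have "SL p \<theta> ! (j-1) \<le> SL p \<theta> ! i" using j by (intro SL_mono) auto
    then show "x powr q \<le> SL p \<theta> ! i powr q" unfolding x_def using q x0 x_def by (intro powr_mono2) auto
  qed
  also have "\<dots> \<le> (\<Sum>i<p. SL p \<theta> ! i powr q)"
    using j by (intro sum_mono2) auto
  also have "\<dots> = (\<Sum>i<p. \<bar>\<theta> i\<bar> powr q)" by (rule SL_sum)
  also have "\<dots> \<le> t" by (rule sum)
  finally have A: "real j * x powr q \<le> t" by simp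
  have "real j powr (1/q) * x = (real j * x powr q) powr (1/q)"
    using q x0 by (simp add: powr_mult powr_powr)
  also have "\<dots> \<le> t powr (1/q)" using A q x0 by (intro powr_mono2) auto
  finally show ?thesis unfolding sorted_abs_SL x_def .
qed

lemma part2:
  "(\<forall>(P::'z measure) (\<phi>::nat \<Rightarrow> 'z \<Rightarrow> nat \<Rightarrow> real) (p::nat \<Rightarrow> nat) (link::real \<Rightarrow> real)
       (q::real) (Mb::real) (t::nat \<Rightarrow> real).
     0 < q \<and> q < 2 \<and> 0 < Mb \<and> (\<forall>n. 2 \<le> p n) \<and> (\<forall>n. 0 \<le> t n) \<and>
     (\<lambda>n. t n * (ln (real (p n)) / real n) powr (1 - q / 2)) \<longlonglongrightarrow> 0 \<and>
     (\<forall>n. t n * (real n / ln (real (p n))) powr (q / 2) \<le> real (p n))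
     \<longrightarrow> (\<forall>n c. Nclass P (\<phi> n) (p n) (t n) q Mb link c \<longrightarrow>
              Wclass P (\<phi> n) (p n) (t n powr (1 / q)) (1 / q) Mb link c))"
proof (intro allI impI)
  fix P :: "'z measure" and \<phi> :: "nat \<Rightarrow> 'z \<Rightarrow> nat \<Rightarrow> real" and p :: "nat \<Rightarrow> nat"
    and link :: "real \<Rightarrow> real" and q Mb :: real and t :: "nat \<Rightarrow> real" and n and c :: "'z \<Rightarrow> real"
  assume H: "0 < q \<and> q < 2 \<and> 0 < Mb \<and> (\<forall>n. 2 \<le> p n) \<and> (\<forall>n. 0 \<le> t n) \<and>
     (\<lambda>n. t n * (ln (real (p n)) / real n) powr (1 - q / 2)) \<longlonglongrightarrow> 0 \<and>
     (\<forall>n. t n * (real n / ln (real (p n))) powr (q / 2) \<le> real (p n))"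
    and N: "Nclass P (\<phi> n) (p n) (t n) q Mb link c"
  from N obtain \<theta> where th: "(\<forall>i\<ge>p n. \<theta> i = 0)" "(\<Sum>j<p n. \<bar>\<theta> j\<bar> powr q) \<le> t n"
     "norm2_p (p n) \<theta> \<le> Mb" "\<forall>z\<in>space P. c z = link (inner_p (p n) \<theta> (\<phi> n z))"
    unfolding Nclass_def by blast
  have "\<forall>j\<in>{1..p n}. real j powr (1/q) * sorted_abs (p n) \<theta> j \<le> t n powr (1/q)"
    using part2_core[of q \<theta> "p n" "t n"] H th(2) by blast
  then show "Wclass P (\<phi> n) (p n) (t n powr (1 / q)) (1 / q) Mb link c"
    unfolding Wclass_def using th by blast
qed


lemma pow_fact_le_exp:
  fixes x :: real assumes "x \<ge> 0" shows "x ^ n / fact n \<le> exp x"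
proof -
  have s: "(\<lambda>n. x^n /\<^sub>R fact n) sums exp x" by (rule exp_converges)
  have "sum (\<lambda>n. x^n /\<^sub>R fact n) {n} \<le> suminf (\<lambda>n. x^n /\<^sub>R fact n)"
    using s assms by (intro sum_le_suminf) (auto simp: sums_iff)
  then show ?thesis using s by (simp add: sums_iff divide_inverse mult.commute)
qed

lemma summable_moment_series:
  fixes B C :: real assumes B: "B \<ge> 0" and C: "C \<ge> 0"
  shows "summable (\<lambda>k. B^k * (C * sqrt (real k))^k / fact k)"
proof -
  define D where "D = B * C * sqrt (exp 1)"
  have D0: "D \<ge> 0" unfolding D_def using B C by simp
  have bound: "B^k * (C * sqrt (real k))^k / fact k \<le> ((2*D\<^sup>2)^k / fact k + (1/2)^k) / 2" for k
  proof -
    have kk: "real k ^ k \<le> exp (real k) * fact k"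
      using pow_fact_le_exp[of "real k" k] by (simp add: field_simps)
    have "sqrt (real k) ^ k = sqrt (real k ^ k)" by (simp add: real_sqrt_power)
    also have "\<dots> \<le> sqrt (exp (real k) * fact k)" using kk by simp
    also have "\<dots> = sqrt (exp 1) ^ k * sqrt (fact k)"
      by (simp add: real_sqrt_mult real_sqrt_power[symmetric] exp_of_nat_mult[symmetric])
    finally have sk: "sqrt (real k) ^ k \<le> sqrt (exp 1) ^ k * sqrt (fact k)" .
    have fpos: "sqrt (fact k) > 0" by simp
    have "B^k * (C * sqrt (real k))^k / fact k = (B*C)^k * sqrt (real k) ^ k / fact k"
      by (simp add: power_mult_distrib)
    also have "\<dots> \<le> (B*C)^k * (sqrt (exp 1) ^ k * sqrt (fact k)) / fact k"
      using sk B C by (intro divide_right_mono mult_left_mono) auto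
    also have "\<dots> = D^k / sqrt (fact k)"
    proof -
      have "fact k = sqrt (fact k) * sqrt (fact k)" by simp
      then show ?thesis unfolding D_def using fpos
        by (simp add: power_mult_distrib field_simps)
    qed
    also have "\<dots> \<le> ((2*D\<^sup>2)^k / fact k + (1/2)^k) / 2"
    proof -
      define X where "X = D^k * sqrt (2^k) / sqrt (fact k)"
      define Y where "Y = 1 / sqrt (2^k)"
      have "X * Y = D^k / sqrt (fact k)" unfolding X_def Y_def by simp
      moreover have "X * Y \<le> (X\<^sup>2 + Y\<^sup>2) / 2" using sum_squares_bound[of X Y] by (simp add: field_simps)
      moreover have "X\<^sup>2 = (2*D\<^sup>2)^k / fact k" unfolding X_def
        by (simp add: power_divide power_mult_distrib power_mult[symmetric] mult.commute power2_eq_square)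
      moreover have "Y\<^sup>2 = (1/2)^k" unfolding Y_def by (simp add: power_divide power_one_over)
      ultimately show ?thesis by simp
    qed
    finally show ?thesis .
  qed
  have s1: "summable (\<lambda>k. (2*D\<^sup>2)^k / fact k)"
    using summable_exp[of "2*D\<^sup>2"] by (simp add: divide_inverse mult.commute)
  have s2: "summable (\<lambda>k. (1/2::real)^k)" by (rule summable_geometric) simp
  have "summable (\<lambda>k. ((2*D\<^sup>2)^k / fact k + (1/2)^k) / 2)"
    using s1 s2 by (intro summable_divide summable_add)
  then show ?thesis
    by (rule summable_comparison_test'[where N=0]) (use bound B C in auto)
qed

lemma psi2_moment:
  assumes P: "prob_space P" and W: "psi2_le P W C" and C: "C \<ge> 0"
  shows "integrable P (\<lambda>z. \<bar>W z\<bar> ^ k) \<and> (\<integral>z. \<bar>W z\<bar> ^ k \<partial>P) \<le> (C * sqrt (real k)) ^ k"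
proof (cases "k = 0")
  case True
  interpret prob_space P by (rule P)
  show ?thesis using True by (simp add: prob_space)
next
  case False
  then have k: "k \<ge> 1" by simp
  from W k have int: "integrable P (\<lambda>z. \<bar>W z\<bar> ^ k)"
    and le: "(\<integral>z. \<bar>W z\<bar> ^ k \<partial>P) powr (1 / real k) \<le> C * sqrt (real k)"
    unfolding psi2_le_def by auto
  define I where "I = (\<integral>z. \<bar>W z\<bar> ^ k \<partial>P)"
  have I0: "I \<ge> 0" unfolding I_def by simp
  have "I = (I powr (1 / real k)) ^ k"
  proof (cases "I = 0")
    case True then show ?thesis using k by simp
  next
    case False
    then have "I > 0" using I0 by simp
    then have "(I powr (1 / real k)) ^ k = (I powr (1 / real k)) powr (real k)"
      by (simp add: powr_realpow)
    also have "\<dots> = I" using k I0 by (simp add: powr_powr)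
    finally show ?thesis by simp
  qed
  also have "\<dots> \<le> (C * sqrt (real k)) ^ k"
    using le unfolding I_def by (intro power_mono) auto
  finally show ?thesis using int unfolding I_def by simp
qed

definition expb :: "real \<Rightarrow> real \<Rightarrow> real" where
  "expb B C = (\<Sum>k. B^k * (C * sqrt (real k))^k / fact k)"

lemma psi2_exp:
  assumes P: "prob_space P" and W: "psi2_le P W C" and C: "C \<ge> 0" and B: "B \<ge> 0"
  shows "integrable P (\<lambda>z. exp (B * \<bar>W z\<bar>)) \<and> (\<integral>z. exp (B * \<bar>W z\<bar>) \<partial>P) \<le> expb B C"
proof -
  define f where "f k z = B^k / fact k * \<bar>W z\<bar> ^ k" for k z
  have fint: "integrable P (f k)" for k
    unfolding f_def using psi2_moment[OF P W C, of k] by auto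
  have fle: "(\<integral>z. norm (f k z) \<partial>P) \<le> B^k * (C * sqrt (real k))^k / fact k" for k
  proof -
    have "(\<integral>z. norm (f k z) \<partial>P) = B^k / fact k * (\<integral>z. \<bar>W z\<bar> ^ k \<partial>P)"
      unfolding f_def using B by (simp add: abs_mult)
    also have "\<dots> \<le> B^k / fact k * (C * sqrt (real k)) ^ k"
      using psi2_moment[OF P W C, of k] B by (intro mult_left_mono) auto
    finally show ?thesis by simp
  qed
  have sums: "(\<lambda>k. f k z) sums exp (B * \<bar>W z\<bar>)" for z
  proof -
    have "(\<lambda>k. (B * \<bar>W z\<bar>)^k /\<^sub>R fact k) sums exp (B * \<bar>W z\<bar>)" by (rule exp_converges)
    then show ?thesis unfolding f_def by (simp add: power_mult_distrib divide_inverse mult.commute mult.left_commute)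
  qed
  have nsum: "summable (\<lambda>k. norm (f k z))" for z
  proof -
    have "norm (f k z) = f k z" for k unfolding f_def using B by simp
    then show ?thesis using sums[of z] by (simp add: sums_iff)
  qed
  have isum: "summable (\<lambda>k. \<integral>z. norm (f k z) \<partial>P)"
    by (rule summable_comparison_test'[OF summable_moment_series[OF B C], where N=0]) (use fle in auto)
  have eq: "(\<lambda>z. exp (B * \<bar>W z\<bar>)) = (\<lambda>z. \<Sum>k. f k z)"
    using sums by (auto simp: sums_iff)
  have "integrable P (\<lambda>z. \<Sum>k. f k z)"
    by (rule integrable_suminf) (use fint nsum isum in auto)
  moreover have "(\<integral>z. (\<Sum>k. f k z) \<partial>P) = (\<Sum>k. \<integral>z. f k z \<partial>P)"
    by (rule integral_suminf) (use fint nsum isum in auto)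
  moreover have "(\<Sum>k. \<integral>z. f k z \<partial>P) \<le> expb B C"
    unfolding expb_def
  proof (rule suminf_le)
    fix k
    have "(\<integral>z. f k z \<partial>P) = (\<integral>z. norm (f k z) \<partial>P)"
      unfolding f_def using B by (intro Bochner_Integration.integral_cong) auto
    then show "(\<integral>z. f k z \<partial>P) \<le> B^k * (C * sqrt (real k))^k / fact k" using fle by simp
  next
    show "summable (\<lambda>k. \<integral>z. f k z \<partial>P)"
    proof -
      have "(\<integral>z. f k z \<partial>P) = (\<integral>z. norm (f k z) \<partial>P)" for k
        unfolding f_def using B by (intro Bochner_Integration.integral_cong) auto
      then show ?thesis using isum by simp
    qed
  qed (rule summable_moment_series[OF B C])
  ultimately show ?thesis unfolding eq by simp
qed


lemma unit_decomp:
  assumes p: "p \<ge> 1"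
  shows "\<exists>e. norm2_p p e = 1 \<and> (\<forall>x. inner_p p a x = norm2_p p a * inner_p p e x)"
proof (cases "norm2_p p a = 0")
  case True
  then have "(\<Sum>i<p. (a i)\<^sup>2) = 0" unfolding norm2_p_def by simp
  then have a0: "\<forall>i<p. a i = 0" by (simp add: sum_nonneg_eq_0_iff)
  define e :: "nat \<Rightarrow> real" where "e = (\<lambda>i. if i = 0 then 1 else 0)"
  have "(\<Sum>i<p. (e i)\<^sup>2) = (\<Sum>i<p. if i = 0 then 1 else 0)" unfolding e_def by (intro sum.cong) auto
  also have "\<dots> = 1" using p by (subst sum.delta) auto
  finally have "(\<Sum>i<p. (e i)\<^sup>2) = 1" .
  then have "norm2_p p e = 1" unfolding norm2_p_def by simp
  moreover have "inner_p p a x = 0" for x unfolding inner_p_def using a0 by simp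
  ultimately show ?thesis using True by auto
next
  case False
  define N where "N = norm2_p p a"
  have "(\<Sum>i<p. (a i)\<^sup>2) \<ge> 0" by (simp add: sum_nonneg)
  then have Npos: "N > 0" using False unfolding N_def norm2_p_def by simp
  define e where "e = (\<lambda>i. a i / N)"
  have "(\<Sum>i<p. (e i)\<^sup>2) = (\<Sum>i<p. (a i)\<^sup>2) / N\<^sup>2" unfolding e_def by (simp add: power_divide sum_divide_distrib)
  also have "(\<Sum>i<p. (a i)\<^sup>2) = N\<^sup>2" unfolding N_def norm2_p_def by (simp add: sum_nonneg)
  finally have "norm2_p p e = 1" unfolding norm2_p_def using Npos by simp
  moreover have "inner_p p a x = N * inner_p p e x" for x
    unfolding inner_p_def e_def using Npos by (simp add: sum_distrib_left)
  ultimately show ?thesis unfolding N_def by auto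
qed

lemma link_borel:
  fixes link :: "real \<Rightarrow> real"
  assumes L: "\<forall>u v. \<bar>link u - link v\<bar> \<le> K * exp (K * (\<bar>u\<bar> + \<bar>v\<bar>)) * \<bar>u - v\<bar>"
  shows "link \<in> borel_measurable borel"
proof (rule borel_measurable_continuous_onI)
  show "continuous_on UNIV link"
    unfolding continuous_on_def
  proof (intro ballI)
    fix x :: real
    have lim: "((\<lambda>y. K * exp (K * (\<bar>y\<bar> + \<bar>x\<bar>)) * \<bar>y - x\<bar>) \<longlongrightarrow> K * exp (K * (\<bar>x\<bar> + \<bar>x\<bar>)) * \<bar>x - x\<bar>) (at x within UNIV)"
      by (intro tendsto_intros)
    have "((\<lambda>y. link y - link x) \<longlongrightarrow> 0) (at x within UNIV)"
    proof (rule tendsto_0_le[OF _ eventuallyI, where K=1])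
      show "((\<lambda>y. K * exp (K * (\<bar>y\<bar> + \<bar>x\<bar>)) * \<bar>y - x\<bar>) \<longlongrightarrow> 0) (at x within UNIV)" using lim by simp
      fix y show "norm (link y - link x) \<le> norm (K * exp (K * (\<bar>y\<bar> + \<bar>x\<bar>)) * \<bar>y - x\<bar>) * 1"
        using L[rule_format, of y x] by simp
    qed
    then show "(link \<longlongrightarrow> link x) (at x within UNIV)"
      by (simp add: LIM_zero_iff)
  qed
qed

lemma risk_pointwise:
  fixes K Mb Nu Nv Nw u v w :: real
  assumes K: "K > 0" and Mb: "Mb \<ge> 0" and Nu: "0 \<le> Nu" "Nu \<le> Mb" and Nv: "0 \<le> Nv" "Nv \<le> Mb"
    and Nw: "Nw \<ge> 0" and eq: "Nu * u - Nv * v = Nw * w"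
    and L: "abs (link (Nu * u) - link (Nv * v)) \<le> K * exp (K * (abs (Nu * u) + abs (Nv * v))) * abs (Nu * u - Nv * v)"
  shows "(link (Nu * u) - link (Nv * v))\<^sup>2 \<le> K\<^sup>2 * Nw\<^sup>2 *
     ((exp (8*K*Mb*\<bar>u\<bar>) + exp (8*K*Mb*\<bar>v\<bar>)) / 4 + \<bar>w\<bar>^4 / 2)"
proof -
  define G where "G = exp (2*K*Mb*(\<bar>u\<bar> + \<bar>v\<bar>))"
  have a: "\<bar>Nu * u\<bar> \<le> Mb * \<bar>u\<bar>" using Nu by (simp add: abs_mult mult_right_mono)
  have b: "\<bar>Nv * v\<bar> \<le> Mb * \<bar>v\<bar>" using Nv by (simp add: abs_mult mult_right_mono)
  have e1: "exp (K * (\<bar>Nu * u\<bar> + \<bar>Nv * v\<bar>)) \<le> exp (K * (Mb*\<bar>u\<bar> + Mb*\<bar>v\<bar>))"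
    using a b K by simp
  have "abs (link (Nu * u) - link (Nv * v)) \<le> K * exp (K * (Mb*\<bar>u\<bar> + Mb*\<bar>v\<bar>)) * (Nw * \<bar>w\<bar>)"
  proof -
    have "\<bar>Nu * u - Nv * v\<bar> = Nw * \<bar>w\<bar>" using eq Nw by (simp add: abs_mult)
    then show ?thesis using L e1 K by (smt (verit, best) mult_left_mono mult_right_mono abs_ge_zero mult_nonneg_nonneg)
  qed
  then have "(link (Nu * u) - link (Nv * v))\<^sup>2 \<le> (K * exp (K * (Mb*\<bar>u\<bar> + Mb*\<bar>v\<bar>)) * (Nw * \<bar>w\<bar>))\<^sup>2"
    by (metis abs_ge_zero power2_abs power_mono)
  also have "\<dots> = K\<^sup>2 * Nw\<^sup>2 * (G * w\<^sup>2)"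
  proof -
    have "(exp (K * (Mb*\<bar>u\<bar> + Mb*\<bar>v\<bar>)))\<^sup>2 = G" unfolding G_def
      by (simp add: power2_eq_square exp_add[symmetric] algebra_simps)
    then show ?thesis by (simp add: power_mult_distrib algebra_simps)
  qed
  finally have A: "(link (Nu * u) - link (Nv * v))\<^sup>2 \<le> K\<^sup>2 * Nw\<^sup>2 * (G * w\<^sup>2)" .
  have B: "G * w\<^sup>2 \<le> (G\<^sup>2 + (w\<^sup>2)\<^sup>2) / 2" using sum_squares_bound[of G "w\<^sup>2"] by (simp add: field_simps)
  have C: "G\<^sup>2 \<le> (exp (8*K*Mb*\<bar>u\<bar>) + exp (8*K*Mb*\<bar>v\<bar>)) / 2"
  proof -
    have "G\<^sup>2 = exp (4*K*Mb*\<bar>u\<bar>) * exp (4*K*Mb*\<bar>v\<bar>)" unfolding G_def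
      by (simp add: power2_eq_square exp_add[symmetric] algebra_simps)
    also have "\<dots> \<le> ((exp (4*K*Mb*\<bar>u\<bar>))\<^sup>2 + (exp (4*K*Mb*\<bar>v\<bar>))\<^sup>2) / 2"
      using sum_squares_bound[of "exp (4*K*Mb*\<bar>u\<bar>)" "exp (4*K*Mb*\<bar>v\<bar>)"] by (simp add: field_simps)
    also have "(exp (4*K*Mb*\<bar>u\<bar>))\<^sup>2 = exp (8*K*Mb*\<bar>u\<bar>)" by (simp add: power2_eq_square exp_add[symmetric])
    also have "(exp (4*K*Mb*\<bar>v\<bar>))\<^sup>2 = exp (8*K*Mb*\<bar>v\<bar>)" by (simp add: power2_eq_square exp_add[symmetric])
    finally show ?thesis .
  qed
  have w4: "(w\<^sup>2)\<^sup>2 = \<bar>w\<bar>^4" by (simp add: power_even_abs_numeral flip: power_mult)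
  have "G * w\<^sup>2 \<le> (exp (8*K*Mb*\<bar>u\<bar>) + exp (8*K*Mb*\<bar>v\<bar>)) / 4 + \<bar>w\<bar>^4 / 2"
    using B C unfolding w4 by argo
  then have "K\<^sup>2 * Nw\<^sup>2 * (G * w\<^sup>2) \<le> K\<^sup>2 * Nw\<^sup>2 * ((exp (8*K*Mb*\<bar>u\<bar>) + exp (8*K*Mb*\<bar>v\<bar>)) / 4 + \<bar>w\<bar>^4 / 2)"
    by (intro mult_left_mono) auto
  then show ?thesis using A by linarith
qed

lemma risk:
  fixes P :: "'z measure"
  assumes P: "prob_space P" and K: "K > 0" and Mb: "Mb \<ge> 0"
    and L: "\<forall>u v. \<bar>link u - link v\<bar> \<le> K * exp (K * (\<bar>u\<bar> + \<bar>v\<bar>)) * \<bar>u - v\<bar>"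
    and U: "psi2_le P U K" and V: "psi2_le P V K" and W: "psi2_le P Wf K"
    and Nu: "0 \<le> Nu" "Nu \<le> Mb" and Nv: "0 \<le> Nv" "Nv \<le> Mb" and Nw: "Nw \<ge> 0"
    and eq: "\<forall>z. Nu * U z - Nv * V z = Nw * Wf z"
  shows "(\<lambda>z. link (Nu * U z) - link (Nv * V z)) \<in> borel_measurable P \<and>
         integrable P (\<lambda>z. (link (Nu * U z) - link (Nv * V z))\<^sup>2) \<and>
         (\<integral>z. (link (Nu * U z) - link (Nv * V z))\<^sup>2 \<partial>P) \<le> K\<^sup>2 * (expb (8*K*Mb) K / 2 + 8*K^4) * Nw\<^sup>2"
proof -
  have lb: "link \<in> borel_measurable borel" by (rule link_borel[OF L])
  have Um: "U \<in> borel_measurable P" and Vm: "V \<in> borel_measurable P" and Wm: "Wf \<in> borel_measurable P"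
    using U V W unfolding psi2_le_def by auto
  define r where "r z = link (Nu * U z) - link (Nv * V z)" for z
  have rm: "r \<in> borel_measurable P" unfolding r_def
    using lb Um Vm by (intro borel_measurable_diff measurable_compose[OF _ lb]) auto
  define H where "H z = (exp (8*K*Mb*\<bar>U z\<bar>) + exp (8*K*Mb*\<bar>V z\<bar>)) / 4 + \<bar>Wf z\<bar>^4 / 2" for z
  have B: "8*K*Mb \<ge> 0" using K Mb by simp
  have eU: "integrable P (\<lambda>z. exp (8*K*Mb*\<bar>U z\<bar>)) \<and> (\<integral>z. exp (8*K*Mb*\<bar>U z\<bar>) \<partial>P) \<le> expb (8*K*Mb) K"
    using psi2_exp[OF P U _ B] K by simp
  have eV: "integrable P (\<lambda>z. exp (8*K*Mb*\<bar>V z\<bar>)) \<and> (\<integral>z. exp (8*K*Mb*\<bar>V z\<bar>) \<partial>P) \<le> expb (8*K*Mb) K"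
    using psi2_exp[OF P V _ B] K by simp
  have mW: "integrable P (\<lambda>z. \<bar>Wf z\<bar>^4) \<and> (\<integral>z. \<bar>Wf z\<bar>^4 \<partial>P) \<le> (K * sqrt (real 4))^4"
    using psi2_moment[OF P W, of 4] K by simp
  have s4: "(K * sqrt (real 4))^4 = 16 * K^4"
  proof -
    have "sqrt (real 4) = 2" by (simp add: real_sqrt_eq_iff)
    then show ?thesis by (simp add: power_mult_distrib)
  qed
  have Hint: "integrable P H" unfolding H_def using eU eV mW by auto
  have "(\<integral>z. H z \<partial>P) = ((\<integral>z. exp (8*K*Mb*\<bar>U z\<bar>) \<partial>P) + (\<integral>z. exp (8*K*Mb*\<bar>V z\<bar>) \<partial>P)) / 4 + (\<integral>z. \<bar>Wf z\<bar>^4 \<partial>P) / 2"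
    unfolding H_def using eU eV mW by simp
  also have "\<dots> \<le> (expb (8*K*Mb) K + expb (8*K*Mb) K) / 4 + 16 * K^4 / 2"
    using eU eV mW s4 by (intro add_mono divide_right_mono) auto
  finally have Hle: "(\<integral>z. H z \<partial>P) \<le> expb (8*K*Mb) K / 2 + 8*K^4" by simp
  have pw: "(r z)\<^sup>2 \<le> K\<^sup>2 * Nw\<^sup>2 * H z" for z
    unfolding r_def H_def
  proof (rule risk_pointwise[OF K Mb Nu Nv Nw])
    show "Nu * U z - Nv * V z = Nw * Wf z" using eq by blast
    show "\<bar>link (Nu * U z) - link (Nv * V z)\<bar> \<le> K * exp (K * (\<bar>Nu * U z\<bar> + \<bar>Nv * V z\<bar>)) * \<bar>Nu * U z - Nv * V z\<bar>"
      using L by blast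
  qed
  have BI: "integrable P (\<lambda>z. K\<^sup>2 * Nw\<^sup>2 * H z)" using Hint by simp
  have rint: "integrable P (\<lambda>z. (r z)\<^sup>2)"
  proof (rule Bochner_Integration.integrable_bound[OF BI])
    show "(\<lambda>z. (r z)\<^sup>2) \<in> borel_measurable P" using rm by simp
    show "AE x in P. norm ((r x)\<^sup>2) \<le> norm (K\<^sup>2 * Nw\<^sup>2 * H x)"
    proof (intro AE_I2)
      fix x
      have "(r x)\<^sup>2 \<le> K\<^sup>2 * Nw\<^sup>2 * H x" by (rule pw)
      then show "norm ((r x)\<^sup>2) \<le> norm (K\<^sup>2 * Nw\<^sup>2 * H x)" by simp
    qed
  qed
  have "(\<integral>z. (r z)\<^sup>2 \<partial>P) \<le> (\<integral>z. K\<^sup>2 * Nw\<^sup>2 * H z \<partial>P)"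
    using rint BI pw by (intro integral_mono) auto
  also have "\<dots> = K\<^sup>2 * Nw\<^sup>2 * (\<integral>z. H z \<partial>P)" by simp
  also have "\<dots> \<le> K\<^sup>2 * Nw\<^sup>2 * (expb (8*K*Mb) K / 2 + 8*K^4)"
    using Hle by (intro mult_left_mono) auto
  also have "\<dots> = K\<^sup>2 * (expb (8*K*Mb) K / 2 + 8*K^4) * Nw\<^sup>2" by (simp add: algebra_simps)
  finally show ?thesis using rm rint unfolding r_def by simp
qed


lemma sq_powr: "x > 0 \<Longrightarrow> (t * x powr (-a))\<^sup>2 = t\<^sup>2 * x powr (-2*a)"
  for x t a :: real
  by (simp add: power_mult_distrib powr_realpow[symmetric] powr_powr mult.commute)

lemma SL_bound:
  assumes W: "\<forall>j\<in>{1..p}. real j powr \<alpha> * sorted_abs p \<theta> j \<le> t" and i: "i < p"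
  shows "SL p \<theta> ! i \<le> t * (real i + 1) powr (-\<alpha>)"
proof -
  have "real (Suc i) powr \<alpha> * SL p \<theta> ! i \<le> t"
    using W[rule_format, of "Suc i"] i by (simp add: sorted_abs_SL)
  then have "SL p \<theta> ! i \<le> t / (real i + 1) powr \<alpha>"
    by (simp add: field_simps add.commute)
  then show ?thesis by (simp add: powr_minus_divide)
qed

lemma sparse_approx:
  fixes \<alpha> t :: real
  assumes a: "\<alpha> > 1/2" and t: "t \<ge> 0"
    and W: "\<forall>j\<in>{1..p}. real j powr \<alpha> * sorted_abs p \<theta> j \<le> t"
  shows "\<exists>S. S \<subseteq> {..<p} \<and> card S \<le> m \<and>
     (\<Sum>i\<in>{..<p}-S. (\<theta> i)\<^sup>2) \<le> (1 + 2*\<alpha>/(2*\<alpha>-1)) * (t\<^sup>2 * (real m + 1) powr (1-2*\<alpha>))"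
proof -
  define \<tau> where "\<tau> = t * (real m + 1) powr (-\<alpha>)"
  define S where "S = {i. i < p \<and> \<bar>\<theta> i\<bar> > \<tau>}"
  have Ssub: "S \<subseteq> {..<p}" unfolding S_def by auto
  have "card S = card {i. i < p \<and> SL p \<theta> ! i > \<tau>}"
    unfolding S_def using SL_card[of p "\<lambda>x. x > \<tau>" \<theta>] by simp
  also have "\<dots> \<le> card {..<m}"
  proof (intro card_mono)
    show "{i. i < p \<and> \<tau> < SL p \<theta> ! i} \<subseteq> {..<m}"
    proof
      fix i assume "i \<in> {i. i < p \<and> \<tau> < SL p \<theta> ! i}"
      then have ip: "i < p" and gt: "\<tau> < SL p \<theta> ! i" by auto
      show "i \<in> {..<m}"
      proof (rule ccontr)
        assume "i \<notin> {..<m}"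
        then have "m \<le> i" by simp
        then have "SL p \<theta> ! i \<le> SL p \<theta> ! m" using ip by (intro SL_mono) auto
        also have "\<dots> \<le> \<tau>" unfolding \<tau>_def using SL_bound[OF W, of m] ip \<open>m \<le> i\<close> by simp
        finally show False using gt by simp
      qed
    qed
  qed simp
  finally have cS: "card S \<le> m" by simp
  define g where "g x = (if x > \<tau> then 0 else x\<^sup>2)" for x :: real
  have "(\<Sum>i\<in>{..<p}-S. (\<theta> i)\<^sup>2) = (\<Sum>i<p. g \<bar>\<theta> i\<bar>)"
  proof -
    have "(\<Sum>i<p. g \<bar>\<theta> i\<bar>) = (\<Sum>i<p. if \<bar>\<theta> i\<bar> > \<tau> then 0 else (\<theta> i)\<^sup>2)"
      unfolding g_def by (simp only: power2_abs)
    also have "\<dots> = (\<Sum>i\<in>{..<p} \<inter> - {i. \<bar>\<theta> i\<bar> > \<tau>}. (\<theta> i)\<^sup>2)"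
      by (simp add: sum.If_cases)
    also have "{..<p} \<inter> - {i. \<bar>\<theta> i\<bar> > \<tau>} = {..<p} - S" unfolding S_def by auto
    finally show ?thesis by simp
  qed
  also have "\<dots> = (\<Sum>i<p. g (SL p \<theta> ! i))" by (rule SL_sum[symmetric])
  also have "\<dots> \<le> (\<Sum>i<p. if i < m then \<tau>\<^sup>2 else t\<^sup>2 * (real i + 1) powr (-(2*\<alpha>)))"
  proof (intro sum_mono)
    fix i assume "i \<in> {..<p}"
    then have ip: "i < p" by simp
    define x where "x = SL p \<theta> ! i"
    have x0: "x \<ge> 0" unfolding x_def using ip by (rule SL_nonneg)
    have xb: "x \<le> t * (real i + 1) powr (-\<alpha>)" unfolding x_def using SL_bound[OF W ip] .
    show "g (SL p \<theta> ! i) \<le> (if i < m then \<tau>\<^sup>2 else t\<^sup>2 * (real i + 1) powr (-(2*\<alpha>)))"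
    proof (cases "i < m")
      case True
      have "g x \<le> \<tau>\<^sup>2"
        unfolding g_def using x0 by (auto intro: power_mono)
      then show ?thesis using True x_def by simp
    next
      case False
      have "g x \<le> x\<^sup>2" unfolding g_def by simp
      also have "\<dots> \<le> (t * (real i + 1) powr (-\<alpha>))\<^sup>2" using x0 xb by (intro power_mono) auto
      also have "\<dots> = t\<^sup>2 * (real i + 1) powr (-(2*\<alpha>))" using sq_powr[of "real i + 1" t \<alpha>] by simp
      finally show ?thesis using False x_def by simp
    qed
  qed
  also have "\<dots> \<le> (\<Sum>i\<in>{..<m} \<union> {m..<p}. if i < m then \<tau>\<^sup>2 else t\<^sup>2 * (real i + 1) powr (-(2*\<alpha>)))"
    by (intro sum_mono2) auto
  also have "\<dots> = (\<Sum>i\<in>{..<m}. if i < m then \<tau>\<^sup>2 else t\<^sup>2 * (real i + 1) powr (-(2*\<alpha>)))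
       + (\<Sum>i\<in>{m..<p}. if i < m then \<tau>\<^sup>2 else t\<^sup>2 * (real i + 1) powr (-(2*\<alpha>)))"
    by (intro sum.union_disjoint) auto
  also have "(\<Sum>i\<in>{..<m}. if i < m then \<tau>\<^sup>2 else t\<^sup>2 * (real i + 1) powr (-(2*\<alpha>))) = real m * \<tau>\<^sup>2"
    by simp
  also have "(\<Sum>i\<in>{m..<p}. if i < m then \<tau>\<^sup>2 else t\<^sup>2 * (real i + 1) powr (-(2*\<alpha>)))
       = t\<^sup>2 * (\<Sum>i\<in>{m..<p}. (real i + 1) powr (-(2*\<alpha>)))"
    by (simp add: sum_distrib_left)
  also have "t\<^sup>2 * (\<Sum>i\<in>{m..<p}. (real i + 1) powr (-(2*\<alpha>))) \<le> t\<^sup>2 * ((real m + 1) powr (1 - 2*\<alpha>) * (2*\<alpha> / (2*\<alpha> - 1)))"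
    using tail_sum2[of "2*\<alpha>" m p] a by (intro mult_left_mono) auto
  also have "real m * \<tau>\<^sup>2 \<le> t\<^sup>2 * (real m + 1) powr (1 - 2*\<alpha>)"
  proof -
    have "real m * \<tau>\<^sup>2 = t\<^sup>2 * (real m * (real m + 1) powr (-2*\<alpha>))"
      unfolding \<tau>_def using sq_powr[of "real m + 1" t \<alpha>] by simp
    also have "real m * (real m + 1) powr (-2*\<alpha>) \<le> (real m + 1) * (real m + 1) powr (-2*\<alpha>)"
      by (intro mult_right_mono) auto
    also have "\<dots> = (real m + 1) powr (1 - 2*\<alpha>)"
      by (simp add: powr_diff powr_minus_divide)
    finally show ?thesis by (simp add: mult_left_mono)
  qed
  finally have "(\<Sum>i\<in>{..<p}-S. (\<theta> i)\<^sup>2) \<le> t\<^sup>2 * (real m + 1) powr (1 - 2*\<alpha>) + t\<^sup>2 * ((real m + 1) powr (1 - 2*\<alpha>) * (2*\<alpha> / (2*\<alpha> - 1)))"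
    by simp
  then have "(\<Sum>i\<in>{..<p}-S. (\<theta> i)\<^sup>2) \<le> (1 + 2*\<alpha>/(2*\<alpha>-1)) * (t\<^sup>2 * (real m + 1) powr (1-2*\<alpha>))"
    by (simp add: algebra_simps)
  then show ?thesis using Ssub cS by blast
qed


lemma inner_split:
  assumes "\<forall>i. a i = b i + d i"
  shows "inner_p p a x = inner_p p b x + inner_p p d x"
  unfolding inner_p_def using assms by (simp add: sum.distrib[symmetric] distrib_right)

lemma part1:
  "(\<forall>(P::'z measure) (\<phi>::nat \<Rightarrow> 'z \<Rightarrow> nat \<Rightarrow> real) (p::nat \<Rightarrow> nat) (link::real \<Rightarrow> real)
       (k::real) (K::real) (l::nat) (\<alpha>::real) (Mb::real) (t::nat \<Rightarrow> real).
     prob_space P \<and> 0 < k \<and> 0 < K \<and> (\<forall>n. 2 \<le> p n) \<and>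
     (\<forall>n \<Delta>. norm2_p (p n) \<Delta> = 1 \<longrightarrow> psi2_le P (\<lambda>z. inner_p (p n) \<Delta> (\<phi> n z)) K) \<and>
     (\<forall>n lam. is_eigenvalue_p (p n) (Sigma1 P (\<phi> n)) lam \<longrightarrow> k \<le> lam \<and> lam \<le> K) \<and>
     (\<forall>u v. \<bar>link u - link v\<bar> \<le> K * exp (K * (\<bar>u\<bar> + \<bar>v\<bar>)) * \<bar>u - v\<bar>) \<and>
     l \<in> {1, 2} \<and> \<alpha> > 1 / real l \<and> 0 < Mb \<and> (\<forall>n. 0 \<le> t n) \<and>
     (\<lambda>n. t n powr (1 / \<alpha>) * (ln (real (p n)) / real n) powr (1 - 1 / (real l * \<alpha>)))
        \<longlonglongrightarrow> 0 \<and>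
     (\<forall>n. t n powr (1 / \<alpha>) * (real n / ln (real (p n))) powr (1 / (real l * \<alpha>)) \<le> real (p n))
     \<longrightarrow> (\<exists>K'. \<forall>\<^sub>F n in sequentially. \<forall>c.
            Wclass P (\<phi> n) (p n) (t n) \<alpha> Mb link c \<longrightarrow>
            AGLS P (\<phi> n) (p n) n
              (t n powr (1 / \<alpha>) * (real n / ln (real (p n))) powr (1 / (real l * \<alpha>)))
              (if l = 1 then 2 else 1) link K' c))"
proof (intro allI impI)
  fix P :: "'z measure" and \<phi> :: "nat \<Rightarrow> 'z \<Rightarrow> nat \<Rightarrow> real" and p :: "nat \<Rightarrow> nat"
    and link :: "real \<Rightarrow> real" and k K :: real and l :: nat and \<alpha> Mb :: real and t :: "nat \<Rightarrow> real"
  assume H: "prob_space P \<and> 0 < k \<and> 0 < K \<and> (\<forall>n. 2 \<le> p n) \<and>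
     (\<forall>n \<Delta>. norm2_p (p n) \<Delta> = 1 \<longrightarrow> psi2_le P (\<lambda>z. inner_p (p n) \<Delta> (\<phi> n z)) K) \<and>
     (\<forall>n lam. is_eigenvalue_p (p n) (Sigma1 P (\<phi> n)) lam \<longrightarrow> k \<le> lam \<and> lam \<le> K) \<and>
     (\<forall>u v. \<bar>link u - link v\<bar> \<le> K * exp (K * (\<bar>u\<bar> + \<bar>v\<bar>)) * \<bar>u - v\<bar>) \<and>
     l \<in> {1, 2} \<and> \<alpha> > 1 / real l \<and> 0 < Mb \<and> (\<forall>n. 0 \<le> t n) \<and>
     (\<lambda>n. t n powr (1 / \<alpha>) * (ln (real (p n)) / real n) powr (1 - 1 / (real l * \<alpha>)))
        \<longlonglongrightarrow> 0 \<and>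
     (\<forall>n. t n powr (1 / \<alpha>) * (real n / ln (real (p n))) powr (1 / (real l * \<alpha>)) \<le> real (p n))"
  then have P: "prob_space P" and K: "K > 0" and p2: "\<And>n. 2 \<le> p n"
    and psi: "\<And>n \<Delta>. norm2_p (p n) \<Delta> = 1 \<Longrightarrow> psi2_le P (\<lambda>z. inner_p (p n) \<Delta> (\<phi> n z)) K"
    and L: "\<forall>u v. \<bar>link u - link v\<bar> \<le> K * exp (K * (\<bar>u\<bar> + \<bar>v\<bar>)) * \<bar>u - v\<bar>"
    and l: "l \<in> {1,2}" and a: "\<alpha> > 1 / real l" and Mb: "0 < Mb" and t0: "\<And>n. 0 \<le> t n"
    by auto
  have a2: "\<alpha> > 1/2" using l a by auto
  define C1 where "C1 = K\<^sup>2 * (expb (8*K*Mb) K / 2 + 8*K^4)"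
  define Ct where "Ct = 1 + 2*\<alpha>/(2*\<alpha>-1)"
  have Ct0: "Ct \<ge> 0" unfolding Ct_def using a2 by simp
  have "expb (8*K*Mb) K \<ge> 0"
    unfolding expb_def using K Mb by (intro suminf_nonneg summable_moment_series) auto
  then have C10: "C1 \<ge> 0" unfolding C1_def using K by simp
  show "\<exists>K'. \<forall>\<^sub>F n in sequentially. \<forall>c.
            Wclass P (\<phi> n) (p n) (t n) \<alpha> Mb link c \<longrightarrow>
            AGLS P (\<phi> n) (p n) n
              (t n powr (1 / \<alpha>) * (real n / ln (real (p n))) powr (1 / (real l * \<alpha>)))
              (if l = 1 then 2 else 1) link K' c"
  proof (intro exI[of _ "C1 * Ct"] eventually_sequentiallyI[of 1] allI impI)
    fix n c assume n1: "1 \<le> n" and Wc: "Wclass P (\<phi> n) (p n) (t n) \<alpha> Mb link c"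
    define pn where "pn = p n"
    have pn2: "pn \<ge> 2" unfolding pn_def by (rule p2)
    define s where "s = t n powr (1 / \<alpha>) * (real n / ln (real pn)) powr (1 / (real l * \<alpha>))"
    define Lg where "Lg = ln (real pn) / real n"
    have Lg0: "Lg > 0" unfolding Lg_def using pn2 n1 by simp
    have s0: "s \<ge> 0" unfolding s_def by simp
    define m where "m = nat (floor s)"
    have ms: "real m \<le> s" unfolding m_def using s0 by simp
    have sm: "s < real m + 1" unfolding m_def using s0 by linarith
    from Wc obtain \<theta> where th0: "\<forall>i\<ge>pn. \<theta> i = 0"
      and thW: "\<forall>j\<in>{1..pn}. real j powr \<alpha> * sorted_abs pn \<theta> j \<le> t n"
      and thN: "norm2_p pn \<theta> \<le> Mb"
      and thc: "\<forall>z\<in>space P. c z = link (inner_p pn \<theta> (\<phi> n z))"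
      unfolding Wclass_def pn_def by blast
    obtain S where Ssub: "S \<subseteq> {..<pn}" and cS: "card S \<le> m"
      and Ssum: "(\<Sum>i\<in>{..<pn}-S. (\<theta> i)\<^sup>2) \<le> Ct * ((t n)\<^sup>2 * (real m + 1) powr (1-2*\<alpha>))"
      using sparse_approx[OF a2 t0 thW, of m] unfolding Ct_def by blast
    define ts where "ts i = (if i \<in> S then \<theta> i else 0)" for i
    define d where "d i = (if i \<in> S then 0 else \<theta> i)" for i
    have tsplit: "\<forall>i. \<theta> i = ts i + d i" unfolding ts_def d_def by simp
    have ts0: "\<forall>i\<ge>pn. ts i = 0" unfolding ts_def using Ssub by auto
    have l0: "real (l0_p pn ts) \<le> s"
    proof -
      have "{i. i < pn \<and> ts i \<noteq> 0} \<subseteq> S" unfolding ts_def by auto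
      then have "l0_p pn ts \<le> card S" unfolding l0_p_def
        by (intro card_mono) (use Ssub finite_subset in auto)
      then show ?thesis using cS ms by linarith
    qed
    obtain eu where eu: "norm2_p pn eu = 1" "\<forall>x. inner_p pn \<theta> x = norm2_p pn \<theta> * inner_p pn eu x"
      using unit_decomp[of pn \<theta>] pn2 by auto
    obtain ev where ev: "norm2_p pn ev = 1" "\<forall>x. inner_p pn ts x = norm2_p pn ts * inner_p pn ev x"
      using unit_decomp[of pn ts] pn2 by auto
    obtain ew where ew: "norm2_p pn ew = 1" "\<forall>x. inner_p pn d x = norm2_p pn d * inner_p pn ew x"
      using unit_decomp[of pn d] pn2 by auto
    define U where "U z = inner_p pn eu (\<phi> n z)" for z
    define V where "V z = inner_p pn ev (\<phi> n z)" for z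
    define Wf where "Wf z = inner_p pn ew (\<phi> n z)" for z
    have PU: "psi2_le P U K" unfolding U_def pn_def using psi eu(1) pn_def by auto
    have PV: "psi2_le P V K" unfolding V_def pn_def using psi ev(1) pn_def by auto
    have PW: "psi2_le P Wf K" unfolding Wf_def pn_def using psi ew(1) pn_def by auto
    have Nts: "norm2_p pn ts \<le> norm2_p pn \<theta>"
      unfolding norm2_p_def ts_def by (intro real_sqrt_le_mono sum_mono) auto
    have Nu: "0 \<le> norm2_p pn \<theta>" "norm2_p pn \<theta> \<le> Mb" using thN unfolding norm2_p_def by (auto simp: sum_nonneg)
    have Nv: "0 \<le> norm2_p pn ts" "norm2_p pn ts \<le> Mb"
      using order_trans[OF Nts Nu(2)] unfolding norm2_p_def by (auto intro: sum_nonneg)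
    have Nw: "0 \<le> norm2_p pn d" unfolding norm2_p_def by (simp add: sum_nonneg)
    have eq: "\<forall>z. norm2_p pn \<theta> * U z - norm2_p pn ts * V z = norm2_p pn d * Wf z"
      unfolding U_def V_def Wf_def using eu(2) ev(2) ew(2) inner_split[OF tsplit] by (metis add_diff_cancel_left')
    note R = risk[OF P K less_imp_le[OF Mb] L PU PV PW Nu Nv Nw eq]
    define r where "r z = link (inner_p pn \<theta> (\<phi> n z)) - link (inner_p pn ts (\<phi> n z))" for z
    have req: "r = (\<lambda>z. link (norm2_p pn \<theta> * U z) - link (norm2_p pn ts * V z))"
      unfolding r_def U_def V_def using eu(2) ev(2) by auto
    have dsum: "(norm2_p pn d)\<^sup>2 = (\<Sum>i\<in>{..<pn}-S. (\<theta> i)\<^sup>2)"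
    proof -
      have "(norm2_p pn d)\<^sup>2 = (\<Sum>i<pn. (d i)\<^sup>2)" unfolding norm2_p_def by (simp add: sum_nonneg)
      also have "\<dots> = (\<Sum>i<pn. if i \<in> S then 0 else (\<theta> i)\<^sup>2)" unfolding d_def by (intro sum.cong) auto
      also have "\<dots> = (\<Sum>i\<in>{..<pn} \<inter> - S. (\<theta> i)\<^sup>2)" by (simp add: sum.If_cases)
      also have "{..<pn} \<inter> - S = {..<pn} - S" by auto
      finally show ?thesis .
    qed
    have Lgs: "s = t n powr (1/\<alpha>) * (1 / Lg) powr (1 / (real l * \<alpha>))"
      unfolding s_def Lg_def by simp
    have EB: "(t n)\<^sup>2 * (real m + 1) powr (1 - 2*\<alpha>) \<le> (s * Lg) ^ (if l = 1 then 2 else 1)"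
      by (rule expo_bound[OF t0 l a Lg0 Lgs sm])
    have "(\<integral>z. (r z)\<^sup>2 \<partial>P) \<le> C1 * (norm2_p pn d)\<^sup>2"
      using R unfolding req C1_def by simp
    also have "\<dots> \<le> C1 * (Ct * ((t n)\<^sup>2 * (real m + 1) powr (1-2*\<alpha>)))"
      using dsum Ssum C10 by (intro mult_left_mono) auto
    also have "\<dots> \<le> C1 * (Ct * (s * Lg) ^ (if l = 1 then 2 else 1))"
      using EB C10 Ct0 by (intro mult_left_mono) auto
    finally have rb: "(\<integral>z. (r z)\<^sup>2 \<partial>P) \<le> C1 * Ct * (s * ln (real pn) / real n) ^ (if l = 1 then 2 else 1)"
      unfolding Lg_def by (simp add: mult.assoc)
    have rc: "\<forall>z\<in>space P. c z = link (inner_p pn ts (\<phi> n z)) + r z"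
      using thc unfolding r_def by simp
    have "AGLS P (\<phi> n) pn n s (if l = 1 then 2 else 1) link (C1 * Ct) c"
      unfolding AGLS_def
    proof (intro exI[of _ ts] exI[of _ r] conjI)
      show "r \<in> borel_measurable P" "integrable P (\<lambda>z. (r z)\<^sup>2)" using R unfolding req by auto
    qed (use ts0 l0 rc rb in auto)
    then show "AGLS P (\<phi> n) (p n) n
              (t n powr (1 / \<alpha>) * (real n / ln (real (p n))) powr (1 / (real l * \<alpha>)))
              (if l = 1 then 2 else 1) link (C1 * Ct) c"
      unfolding s_def pn_def .
  qed
qed


lemma L2_prod:
  fixes g h :: "real^'d \<Rightarrow> real"
  assumes g: "L2cube g" and h: "L2cube h"
  shows "integrable (lebesgue_on unit_cube) (\<lambda>x. g x * h x)"
proof -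
  have gm: "g \<in> borel_measurable (lebesgue_on unit_cube)" and gi: "integrable (lebesgue_on unit_cube) (\<lambda>x. (g x)\<^sup>2)"
    using g unfolding L2cube_def by auto
  have hm: "h \<in> borel_measurable (lebesgue_on unit_cube)" and hi: "integrable (lebesgue_on unit_cube) (\<lambda>x. (h x)\<^sup>2)"
    using h unfolding L2cube_def by auto
  have B: "integrable (lebesgue_on unit_cube) (\<lambda>x. (g x)\<^sup>2 + (h x)\<^sup>2)" using gi hi by simp
  show ?thesis
  proof (rule Bochner_Integration.integrable_bound[OF B])
    show "(\<lambda>x. g x * h x) \<in> borel_measurable (lebesgue_on unit_cube)" using gm hm by simp
    show "AE x in lebesgue_on unit_cube. norm (g x * h x) \<le> norm ((g x)\<^sup>2 + (h x)\<^sup>2)"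
    proof (intro AE_I2)
      fix x
      have "2 * \<bar>g x\<bar> * \<bar>h x\<bar> \<le> (g x)\<^sup>2 + (h x)\<^sup>2"
        using sum_squares_bound[of "\<bar>g x\<bar>" "\<bar>h x\<bar>"] by simp
      moreover have "\<bar>g x\<bar> * \<bar>h x\<bar> \<ge> 0" by simp
      moreover have "norm (g x * h x) = \<bar>g x\<bar> * \<bar>h x\<bar>" by (simp add: abs_mult)
      moreover have "norm ((g x)\<^sup>2 + (h x)\<^sup>2) = (g x)\<^sup>2 + (h x)\<^sup>2" by simp
      ultimately show "norm (g x * h x) \<le> norm ((g x)\<^sup>2 + (h x)\<^sup>2)" by linarith
    qed
  qed
qed

lemma L2_add:
  fixes g h :: "real^'d \<Rightarrow> real"
  assumes g: "L2cube g" and h: "L2cube h"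
  shows "L2cube (\<lambda>x. g x + h x)"
proof -
  have "integrable (lebesgue_on unit_cube) (\<lambda>x. (g x)\<^sup>2 + 2 * (g x * h x) + (h x)\<^sup>2)"
    using L2_prod[OF g h] g h unfolding L2cube_def by simp
  moreover have "(\<lambda>x. (g x + h x)\<^sup>2) = (\<lambda>x. (g x)\<^sup>2 + 2 * (g x * h x) + (h x)\<^sup>2)"
    by (auto simp: power2_sum)
  moreover have "(\<lambda>x. g x + h x) \<in> borel_measurable (lebesgue_on unit_cube)"
    using g h unfolding L2cube_def by auto
  ultimately show ?thesis unfolding L2cube_def by simp
qed

lemma L2_scale:
  fixes g :: "real^'d \<Rightarrow> real"
  assumes g: "L2cube g"
  shows "L2cube (\<lambda>x. a * g x)"
proof -
  have m: "g \<in> borel_measurable (lebesgue_on unit_cube)" and i: "integrable (lebesgue_on unit_cube) (\<lambda>x. (g x)\<^sup>2)"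
    using g unfolding L2cube_def by auto
  have "(\<lambda>x. a * g x) \<in> borel_measurable (lebesgue_on unit_cube)" using m by measurable
  moreover have "integrable (lebesgue_on unit_cube) (\<lambda>x. a\<^sup>2 * (g x)\<^sup>2)" using i by simp
  ultimately show ?thesis unfolding L2cube_def by (simp add: power_mult_distrib)
qed

lemma L2_diff:
  fixes g h :: "real^'d \<Rightarrow> real"
  assumes g: "L2cube g" and h: "L2cube h"
  shows "L2cube (\<lambda>x. g x - h x)"
  using L2_add[OF g L2_scale[OF h, of "-1"]] by simp

lemma L2_sum:
  fixes g :: "nat \<Rightarrow> real^'d \<Rightarrow> real"
  assumes "\<And>i. i \<in> I \<Longrightarrow> L2cube (g i)"
  shows "L2cube (\<lambda>x. \<Sum>i\<in>I. g i x)"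
  using assms
proof (induction I rule: infinite_finite_induct)
  case (infinite A) then show ?case by (simp add: L2cube_def)
next
  case empty then show ?case by (simp add: L2cube_def)
next
  case (insert i F)
  then show ?case by (simp add: L2_add)
qed

lemma L2_ortho_sum:
  fixes \<phi> :: "nat \<Rightarrow> real^'d \<Rightarrow> real"
  assumes onb: "L2_onb \<phi>" and fin: "finite I" and inj: "inj_on \<gamma> I"
  shows "(\<integral>x. (\<Sum>i\<in>I. a i * \<phi> (\<gamma> i) x)\<^sup>2 \<partial>lebesgue_on unit_cube) = (\<Sum>i\<in>I. (a i)\<^sup>2)"
proof -
  have L2: "L2cube (\<phi> j)" for j using onb unfolding L2_onb_def by auto
  have ip: "L2inner (\<phi> i) (\<phi> j) = (if i = j then 1 else 0)" for i j using onb unfolding L2_onb_def by auto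
  have "(\<lambda>x. (\<Sum>i\<in>I. a i * \<phi> (\<gamma> i) x)\<^sup>2) = (\<lambda>x. \<Sum>i\<in>I. \<Sum>k\<in>I. a i * a k * (\<phi> (\<gamma> i) x * \<phi> (\<gamma> k) x))"
    by (auto simp: power2_eq_square sum_product algebra_simps)
  then have "(\<integral>x. (\<Sum>i\<in>I. a i * \<phi> (\<gamma> i) x)\<^sup>2 \<partial>lebesgue_on unit_cube)
     = (\<Sum>i\<in>I. \<Sum>k\<in>I. a i * a k * (\<integral>x. \<phi> (\<gamma> i) x * \<phi> (\<gamma> k) x \<partial>lebesgue_on unit_cube))"
    using L2_prod[OF L2 L2] by (simp add: integral_sum integrable_sum)
  also have "\<dots> = (\<Sum>i\<in>I. \<Sum>k\<in>I. if i = k then a i * a k else 0)"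
  proof (intro sum.cong refl)
    fix i k assume "i \<in> I" "k \<in> I"
    then have "(\<gamma> i = \<gamma> k) = (i = k)" using inj by (auto dest: inj_onD)
    then show "a i * a k * (\<integral>x. \<phi> (\<gamma> i) x * \<phi> (\<gamma> k) x \<partial>lebesgue_on unit_cube) = (if i = k then a i * a k else 0)"
      using ip[of "\<gamma> i" "\<gamma> k"] unfolding L2inner_def by auto
  qed
  also have "\<dots> = (\<Sum>i\<in>I. (a i)\<^sup>2)" using fin by (simp add: power2_eq_square)
  finally show ?thesis .
qed


lemma part3:
  "(\<forall>(P::(real^'d::finite) measure) (f::real^'d \<Rightarrow> real) (K::real)
       (\<phi>::nat \<Rightarrow> real^'d \<Rightarrow> real) (p::nat \<Rightarrow> nat) (l::nat) (\<alpha>::real) (t::nat \<Rightarrow> real).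
     prob_space P \<and> 0 < K \<and>
     f \<in> borel_measurable (lebesgue_on unit_cube) \<and>
     P = density (lebesgue_on unit_cube) (\<lambda>z. ennreal (f z)) \<and>
     (\<forall>z\<in>unit_cube. 0 \<le> f z \<and> f z \<le> K) \<and>
     L2_onb \<phi> \<and> (\<forall>n. 2 \<le> p n) \<and>
     l \<in> {1, 2} \<and> \<alpha> > 1 / real l \<and> (\<forall>n. 0 \<le> t n) \<and>
     (\<lambda>n. t n powr (1 / \<alpha>) * (ln (real (p n)) / real n) powr (1 - 1 / (real l * \<alpha>)))
        \<longlonglongrightarrow> 0 \<and>
     (\<forall>n. t n powr (1 / \<alpha>) * (real n / ln (real (p n))) powr (1 / (real l * \<alpha>)) \<le> real (p n))
     \<longrightarrow> (\<exists>K'. \<forall>\<^sub>F n in sequentially. \<forall>c.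
            Sclass \<phi> (p n) (t n) \<alpha> c \<longrightarrow>
            AGLS P (\<lambda>z i. \<phi> i z) (p n) n
              (t n powr (1 / \<alpha>) * (real n / ln (real (p n))) powr (1 / (real l * \<alpha>)))
              (if l = 1 then 2 else 1) id K' c))"
proof (intro allI impI)
  fix P :: "(real^'d::finite) measure" and f :: "real^'d \<Rightarrow> real" and K :: real
    and \<phi> :: "nat \<Rightarrow> real^'d \<Rightarrow> real" and p :: "nat \<Rightarrow> nat" and l :: nat and \<alpha> :: real and t :: "nat \<Rightarrow> real"
  assume H: "prob_space P \<and> 0 < K \<and>
     f \<in> borel_measurable (lebesgue_on unit_cube) \<and>
     P = density (lebesgue_on unit_cube) (\<lambda>z. ennreal (f z)) \<and>
     (\<forall>z\<in>unit_cube. 0 \<le> f z \<and> f z \<le> K) \<and>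
     L2_onb \<phi> \<and> (\<forall>n. 2 \<le> p n) \<and>
     l \<in> {1, 2} \<and> \<alpha> > 1 / real l \<and> (\<forall>n. 0 \<le> t n) \<and>
     (\<lambda>n. t n powr (1 / \<alpha>) * (ln (real (p n)) / real n) powr (1 - 1 / (real l * \<alpha>)))
        \<longlonglongrightarrow> 0 \<and>
     (\<forall>n. t n powr (1 / \<alpha>) * (real n / ln (real (p n))) powr (1 / (real l * \<alpha>)) \<le> real (p n))"
  then have K: "K > 0" and fm: "f \<in> borel_measurable (lebesgue_on unit_cube)"
    and Pd: "P = density (lebesgue_on unit_cube) (\<lambda>z. ennreal (f z))"
    and fb: "\<And>z. z \<in> unit_cube \<Longrightarrow> 0 \<le> f z \<and> f z \<le> K"
    and onb: "L2_onb \<phi>" and p2: "\<And>n. 2 \<le> p n"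
    and l: "l \<in> {1,2}" and a: "\<alpha> > 1 / real l" and t0: "\<And>n. 0 \<le> t n"
    and sp: "\<And>n. t n powr (1 / \<alpha>) * (real n / ln (real (p n))) powr (1 / (real l * \<alpha>)) \<le> real (p n)"
    by auto
  have a2: "\<alpha> > 1/2" using l a by auto
  define Cb where "Cb = 2 * K * (2*\<alpha> / (2*\<alpha> - 1))"
  have Cb0: "Cb \<ge> 0" unfolding Cb_def using K a2 by simp
  define LC where "LC = (lebesgue_on unit_cube :: (real^'d) measure)"
  have L2\<phi>: "L2cube (\<phi> j)" for j using onb unfolding L2_onb_def by auto
  show "\<exists>K'. \<forall>\<^sub>F n in sequentially. \<forall>c.
            Sclass \<phi> (p n) (t n) \<alpha> c \<longrightarrow>
            AGLS P (\<lambda>z i. \<phi> i z) (p n) n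
              (t n powr (1 / \<alpha>) * (real n / ln (real (p n))) powr (1 / (real l * \<alpha>)))
              (if l = 1 then 2 else 1) id K' c"
  proof (intro exI[of _ Cb] eventually_sequentiallyI[of 1] allI impI)
    fix n c assume n1: "1 \<le> n" and Sc: "Sclass \<phi> (p n) (t n) \<alpha> c"
    define pn where "pn = p n"
    have pn2: "pn \<ge> 2" unfolding pn_def by (rule p2)
    define s where "s = t n powr (1 / \<alpha>) * (real n / ln (real pn)) powr (1 / (real l * \<alpha>))"
    have spn: "s \<le> real pn" unfolding s_def pn_def by (rule sp)
    define Lg where "Lg = ln (real pn) / real n"
    have Lg0: "Lg > 0" unfolding Lg_def using pn2 n1 by simp
    have s0: "s \<ge> 0" unfolding s_def by simp
    define m where "m = nat (floor s)"
    have ms: "real m \<le> s" unfolding m_def using s0 by simp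
    have sm: "s < real m + 1" unfolding m_def using s0 by linarith
    have mp: "m \<le> pn" using ms spn by linarith
    from Sc obtain \<theta> \<pi> where cL2: "L2cube c" and bij: "bij_betw \<pi> {..<pn} {..<pn}"
      and thb: "\<forall>j. \<bar>\<theta> j\<bar> * real (Suc j) powr \<alpha> \<le> t n"
      and lim: "(\<lambda>N. \<integral>x. (c x - (\<Sum>j<pn. \<theta> j * \<phi> (\<pi> j) x) - (\<Sum>j\<in>{pn..<N}. \<theta> j * \<phi> j x))\<^sup>2
              \<partial>lebesgue_on unit_cube) \<longlonglongrightarrow> 0"
      unfolding Sclass_def pn_def by blast
    have injp: "inj_on \<pi> {..<pn}" using bij by (rule bij_betw_imp_inj_on)
    have imp: "\<pi> ` {..<pn} = {..<pn}" using bij by (simp add: bij_betw_def)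
    have imm: "\<pi> ` {..<m} \<subseteq> {..<pn}" using imp mp by auto
    define ts where "ts i = (if i \<in> \<pi> ` {..<m} then \<theta> (inv_into {..<pn} \<pi> i) else 0)" for i
    have ts0: "\<forall>i\<ge>pn. ts i = 0" unfolding ts_def using imm by auto
    have l0: "real (l0_p pn ts) \<le> s"
    proof -
      have "{i. i < pn \<and> ts i \<noteq> 0} \<subseteq> \<pi> ` {..<m}" unfolding ts_def by auto
      then have "l0_p pn ts \<le> card (\<pi> ` {..<m})" unfolding l0_p_def
        by (intro card_mono) auto
      also have "\<dots> \<le> m" using card_image_le[of "{..<m}" \<pi>] by simp
      finally show ?thesis using ms by linarith
    qed
    have inner_eq: "inner_p pn ts (\<lambda>i. \<phi> i z) = (\<Sum>j<m. \<theta> j * \<phi> (\<pi> j) z)" for z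
    proof -
      have "inner_p pn ts (\<lambda>i. \<phi> i z) = (\<Sum>i<pn. ts i * \<phi> i z)" unfolding inner_p_def by simp
      also have "\<dots> = (\<Sum>i\<in>\<pi> ` {..<m}. \<theta> (inv_into {..<pn} \<pi> i) * \<phi> i z)"
        by (rule sum.mono_neutral_cong_right) (use imm in \<open>auto simp: ts_def\<close>)
      also have "\<dots> = (\<Sum>j<m. \<theta> (inv_into {..<pn} \<pi> (\<pi> j)) * \<phi> (\<pi> j) z)"
        using inj_on_subset[OF injp, of "{..<m}"] mp by (subst sum.reindex) auto
      also have "\<dots> = (\<Sum>j<m. \<theta> j * \<phi> (\<pi> j) z)"
        using injp mp by (intro sum.cong refl) (auto simp: inv_into_f_f)
      finally show ?thesis .
    qed
    define r where "r z = c z - (\<Sum>j<m. \<theta> j * \<phi> (\<pi> j) z)" for z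
    have rL2: "L2cube r" unfolding r_def
      by (intro L2_diff cL2 L2_sum L2_scale L2\<phi>)
    define \<gamma> where "\<gamma> j = (if j < pn then \<pi> j else j)" for j
    have injg: "inj_on \<gamma> A" for A
    proof (rule inj_onI)
      fix i k assume "\<gamma> i = \<gamma> k"
      moreover have "\<pi> j < pn" if "j < pn" for j using imp that by auto
      ultimately show "i = k" unfolding \<gamma>_def using injp
        by (auto split: if_splits dest: inj_onD)
    qed
    define R where "R N z = (\<Sum>j\<in>{m..<N}. \<theta> j * \<phi> (\<gamma> j) z)" for N z
    have RL2: "L2cube (R N)" for N unfolding R_def by (intro L2_sum L2_scale L2\<phi>)
    define T where "T = (t n)\<^sup>2 * ((real m + 1) powr (1 - 2*\<alpha>) * (2*\<alpha> / (2*\<alpha> - 1)))"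
    have RT: "(\<integral>x. (R N x)\<^sup>2 \<partial>LC) \<le> T" for N
    proof -
      have "(\<integral>x. (R N x)\<^sup>2 \<partial>LC) = (\<Sum>j\<in>{m..<N}. (\<theta> j)\<^sup>2)"
        unfolding R_def LC_def by (rule L2_ortho_sum[OF onb _ injg]) simp
      also have "\<dots> \<le> (\<Sum>j\<in>{m..<N}. (t n)\<^sup>2 * (real j + 1) powr (-(2*\<alpha>)))"
      proof (intro sum_mono)
        fix j
        have "\<bar>\<theta> j\<bar> \<le> t n / (real j + 1) powr \<alpha>"
          using thb[rule_format, of j] by (simp add: field_simps add.commute)
        then have "\<bar>\<theta> j\<bar> \<le> t n * (real j + 1) powr (-\<alpha>)" by (simp add: powr_minus_divide)
        then have "\<bar>\<theta> j\<bar>\<^sup>2 \<le> (t n * (real j + 1) powr (-\<alpha>))\<^sup>2" by (intro power_mono) auto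
        then show "(\<theta> j)\<^sup>2 \<le> (t n)\<^sup>2 * (real j + 1) powr (-(2*\<alpha>))"
          using sq_powr[of "real j + 1" "t n" \<alpha>] by simp
      qed
      also have "\<dots> = (t n)\<^sup>2 * (\<Sum>j\<in>{m..<N}. (real j + 1) powr (-(2*\<alpha>)))"
        by (simp add: sum_distrib_left)
      also have "\<dots> \<le> T" unfolding T_def
        using tail_sum2[of "2*\<alpha>" m N] a2 by (intro mult_left_mono) auto
      finally show ?thesis .
    qed
    have eqN: "c z - (\<Sum>j<pn. \<theta> j * \<phi> (\<pi> j) z) - (\<Sum>j\<in>{pn..<N}. \<theta> j * \<phi> j z) = r z - R N z"
      if N: "N \<ge> pn" for N z
    proof -
      have "(\<Sum>j<pn. \<theta> j * \<phi> (\<pi> j) z) = (\<Sum>j<m. \<theta> j * \<phi> (\<pi> j) z) + (\<Sum>j\<in>{m..<pn}. \<theta> j * \<phi> (\<pi> j) z)"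
      proof -
        have "{..<pn} = {..<m} \<union> {m..<pn}" using mp by auto
        then have "(\<Sum>j<pn. \<theta> j * \<phi> (\<pi> j) z) = (\<Sum>j\<in>{..<m} \<union> {m..<pn}. \<theta> j * \<phi> (\<pi> j) z)" by simp
        also have "\<dots> = (\<Sum>j<m. \<theta> j * \<phi> (\<pi> j) z) + (\<Sum>j\<in>{m..<pn}. \<theta> j * \<phi> (\<pi> j) z)"
          by (rule sum.union_disjoint) auto
        finally show ?thesis .
      qed
      moreover have "R N z = (\<Sum>j\<in>{m..<pn}. \<theta> j * \<phi> (\<pi> j) z) + (\<Sum>j\<in>{pn..<N}. \<theta> j * \<phi> j z)"
      proof -
        have "{m..<N} = {m..<pn} \<union> {pn..<N}" using mp N by auto
        then have "R N z = (\<Sum>j\<in>{m..<pn} \<union> {pn..<N}. \<theta> j * \<phi> (\<gamma> j) z)"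
          unfolding R_def by simp
        also have "\<dots> = (\<Sum>j\<in>{m..<pn}. \<theta> j * \<phi> (\<gamma> j) z) + (\<Sum>j\<in>{pn..<N}. \<theta> j * \<phi> (\<gamma> j) z)"
          by (rule sum.union_disjoint) auto
        finally have "R N z = (\<Sum>j\<in>{m..<pn}. \<theta> j * \<phi> (\<gamma> j) z) + (\<Sum>j\<in>{pn..<N}. \<theta> j * \<phi> (\<gamma> j) z)" .
        moreover have "(\<Sum>j\<in>{m..<pn}. \<theta> j * \<phi> (\<gamma> j) z) = (\<Sum>j\<in>{m..<pn}. \<theta> j * \<phi> (\<pi> j) z)"
          unfolding \<gamma>_def by (intro sum.cong) auto
        moreover have "(\<Sum>j\<in>{pn..<N}. \<theta> j * \<phi> (\<gamma> j) z) = (\<Sum>j\<in>{pn..<N}. \<theta> j * \<phi> j z)"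
          unfolding \<gamma>_def by (intro sum.cong) auto
        ultimately show ?thesis by simp
      qed
      ultimately show ?thesis unfolding r_def by simp
    qed
    have L2int: "integrable LC (\<lambda>x. (g x)\<^sup>2)" if "L2cube g" for g
      using that unfolding L2cube_def LC_def by auto
    have rLC: "(\<integral>x. (r x)\<^sup>2 \<partial>LC) \<le> 2 * T"
    proof (rule tendsto_lowerbound)
      define e where "e N = (\<integral>x. (c x - (\<Sum>j<pn. \<theta> j * \<phi> (\<pi> j) x) - (\<Sum>j\<in>{pn..<N}. \<theta> j * \<phi> j x))\<^sup>2 \<partial>LC)" for N
      have "e \<longlonglongrightarrow> 0" using lim unfolding e_def LC_def .
      then show "(\<lambda>N. 2 * e N + 2 * T) \<longlonglongrightarrow> 2 * T"
        by (auto intro!: tendsto_eq_intros)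
      show "\<forall>\<^sub>F N in sequentially. (\<integral>x. (r x)\<^sup>2 \<partial>LC) \<le> 2 * e N + 2 * T"
      proof (intro eventually_sequentiallyI[of pn])
        fix N assume N: "pn \<le> N"
        have eN: "e N = (\<integral>x. (r x - R N x)\<^sup>2 \<partial>LC)"
          unfolding e_def using eqN[OF N] by simp
        have i1: "integrable LC (\<lambda>x. (r x - R N x)\<^sup>2)" using L2int[OF L2_diff[OF rL2 RL2]] .
        have i2: "integrable LC (\<lambda>x. (R N x)\<^sup>2)" using L2int[OF RL2] .
        have "(\<integral>x. (r x)\<^sup>2 \<partial>LC) \<le> (\<integral>x. 2 * (r x - R N x)\<^sup>2 + 2 * (R N x)\<^sup>2 \<partial>LC)"
        proof (rule integral_mono)
          show "integrable LC (\<lambda>x. (r x)\<^sup>2)" using L2int[OF rL2] .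
          show "integrable LC (\<lambda>x. 2 * (r x - R N x)\<^sup>2 + 2 * (R N x)\<^sup>2)" using i1 i2 by simp
          fix x
          have "(r x)\<^sup>2 = ((r x - R N x) + R N x)\<^sup>2" by simp
          also have "\<dots> \<le> 2 * (r x - R N x)\<^sup>2 + 2 * (R N x)\<^sup>2"
          proof -
            have h1: "0 \<le> ((r x - R N x) - R N x)\<^sup>2" by simp
            have h2: "((r x - R N x) + R N x)\<^sup>2 + ((r x - R N x) - R N x)\<^sup>2 = 2 * (r x - R N x)\<^sup>2 + 2 * (R N x)\<^sup>2"
              by (simp add: power2_eq_square algebra_simps)
            show ?thesis using h1 h2 by linarith
          qed
          finally show "(r x)\<^sup>2 \<le> 2 * (r x - R N x)\<^sup>2 + 2 * (R N x)\<^sup>2" .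
        qed
        also have "\<dots> = 2 * (\<integral>x. (r x - R N x)\<^sup>2 \<partial>LC) + 2 * (\<integral>x. (R N x)\<^sup>2 \<partial>LC)"
          using i1 i2 by simp
        also have "\<dots> \<le> 2 * e N + 2 * T" using RT[of N] eN by simp
        finally show "(\<integral>x. (r x)\<^sup>2 \<partial>LC) \<le> 2 * e N + 2 * T" .
      qed
    qed simp
    have rm: "r \<in> borel_measurable LC" using rL2 unfolding L2cube_def LC_def by auto
    have fm': "f \<in> borel_measurable LC" using fm unfolding LC_def .
    have fAE: "AE x in LC. 0 \<le> f x" unfolding LC_def using fb by (intro AE_I2) auto
    have sqm: "(\<lambda>x. (r x)\<^sup>2) \<in> borel_measurable LC" using rm by simp
    have PLC: "P = density LC (\<lambda>z. ennreal (f z))" using Pd unfolding LC_def .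
    have iK: "integrable LC (\<lambda>x. K * (r x)\<^sup>2)" using L2int[OF rL2] by simp
    have bnd: "f x * (r x)\<^sup>2 \<le> K * (r x)\<^sup>2" if "x \<in> space LC" for x
      using fb[of x] that unfolding LC_def by (intro mult_right_mono) auto
    have ifr: "integrable LC (\<lambda>x. f x * (r x)\<^sup>2)"
    proof (rule Bochner_Integration.integrable_bound[OF iK])
      show "(\<lambda>x. f x * (r x)\<^sup>2) \<in> borel_measurable LC" using fm' sqm by simp
      show "AE x in LC. norm (f x * (r x)\<^sup>2) \<le> norm (K * (r x)\<^sup>2)"
      proof (rule AE_I2)
        fix x assume x: "x \<in> space LC"
        have "0 \<le> f x" using fb[of x] x unfolding LC_def by simp
        then show "norm (f x * (r x)\<^sup>2) \<le> norm (K * (r x)\<^sup>2)" using bnd[OF x] by simp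
      qed
    qed
    have rP: "integrable P (\<lambda>x. (r x)\<^sup>2)"
      unfolding PLC using integrable_density[OF sqm fm' fAE] ifr by simp
    have "(\<integral>x. (r x)\<^sup>2 \<partial>P) = (\<integral>x. f x * (r x)\<^sup>2 \<partial>LC)"
      unfolding PLC using integral_density[OF sqm fm' fAE] by simp
    also have "\<dots> \<le> (\<integral>x. K * (r x)\<^sup>2 \<partial>LC)"
      using ifr iK bnd by (intro integral_mono) auto
    also have "\<dots> = K * (\<integral>x. (r x)\<^sup>2 \<partial>LC)" by simp
    also have "\<dots> \<le> K * (2 * T)" using rLC K by (intro mult_left_mono) auto
    also have "\<dots> = Cb * ((t n)\<^sup>2 * (real m + 1) powr (1 - 2*\<alpha>))" unfolding Cb_def T_def by (simp add: algebra_simps)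
    also have "\<dots> \<le> Cb * (s * Lg) ^ (if l = 1 then 2 else 1)"
    proof (intro mult_left_mono Cb0)
      have Lgs: "s = t n powr (1/\<alpha>) * (1 / Lg) powr (1 / (real l * \<alpha>))"
        unfolding s_def Lg_def by simp
      show "(t n)\<^sup>2 * (real m + 1) powr (1 - 2*\<alpha>) \<le> (s * Lg) ^ (if l = 1 then 2 else 1)"
        by (rule expo_bound[OF t0 l a Lg0 Lgs sm])
    qed
    finally have rb: "(\<integral>x. (r x)\<^sup>2 \<partial>P) \<le> Cb * (s * ln (real pn) / real n) ^ (if l = 1 then 2 else 1)"
      unfolding Lg_def by simp
    have rmP: "r \<in> borel_measurable P"
      using rm unfolding PLC by (simp add: measurable_cong_sets[OF sets_density refl])
    have rc: "\<forall>z\<in>space P. c z = id (inner_p pn ts ((\<lambda>z i. \<phi> i z) z)) + r z"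
      using inner_eq unfolding r_def by simp
    have "AGLS P (\<lambda>z i. \<phi> i z) pn n s (if l = 1 then 2 else 1) id Cb c"
      unfolding AGLS_def
    proof (intro exI[of _ ts] exI[of _ r] conjI)
      show "r \<in> borel_measurable P" by (rule rmP)
      show "integrable P (\<lambda>z. (r z)\<^sup>2)" by (rule rP)
    qed (use ts0 l0 rc rb in auto)
    then show "AGLS P (\<lambda>z i. \<phi> i z) (p n) n
              (t n powr (1 / \<alpha>) * (real n / ln (real (p n))) powr (1 / (real l * \<alpha>)))
              (if l = 1 then 2 else 1) id Cb c"
      unfolding s_def pn_def .
  qed
qed

theorem proposition5:
  shows
  "(\<forall>(P::'z measure) (\<phi>::nat \<Rightarrow> 'z \<Rightarrow> nat \<Rightarrow> real) (p::nat \<Rightarrow> nat) (link::real \<Rightarrow> real)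
       (k::real) (K::real) (l::nat) (\<alpha>::real) (Mb::real) (t::nat \<Rightarrow> real).
     prob_space P \<and> 0 < k \<and> 0 < K \<and> (\<forall>n. 2 \<le> p n) \<and>
     (\<forall>n \<Delta>. norm2_p (p n) \<Delta> = 1 \<longrightarrow> psi2_le P (\<lambda>z. inner_p (p n) \<Delta> (\<phi> n z)) K) \<and>
     (\<forall>n lam. is_eigenvalue_p (p n) (Sigma1 P (\<phi> n)) lam \<longrightarrow> k \<le> lam \<and> lam \<le> K) \<and>
     (\<forall>u v. \<bar>link u - link v\<bar> \<le> K * exp (K * (\<bar>u\<bar> + \<bar>v\<bar>)) * \<bar>u - v\<bar>) \<and>
     l \<in> {1, 2} \<and> \<alpha> > 1 / real l \<and> 0 < Mb \<and> (\<forall>n. 0 \<le> t n) \<and>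
     (\<lambda>n. t n powr (1 / \<alpha>) * (ln (real (p n)) / real n) powr (1 - 1 / (real l * \<alpha>)))
        \<longlonglongrightarrow> 0 \<and>
     (\<forall>n. t n powr (1 / \<alpha>) * (real n / ln (real (p n))) powr (1 / (real l * \<alpha>)) \<le> real (p n))
     \<longrightarrow> (\<exists>K'. \<forall>\<^sub>F n in sequentially. \<forall>c.
            Wclass P (\<phi> n) (p n) (t n) \<alpha> Mb link c \<longrightarrow>
            AGLS P (\<phi> n) (p n) n
              (t n powr (1 / \<alpha>) * (real n / ln (real (p n))) powr (1 / (real l * \<alpha>)))
              (if l = 1 then 2 else 1) link K' c))
   \<and>
   (\<forall>(P::'z measure) (\<phi>::nat \<Rightarrow> 'z \<Rightarrow> nat \<Rightarrow> real) (p::nat \<Rightarrow> nat) (link::real \<Rightarrow> real)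
       (q::real) (Mb::real) (t::nat \<Rightarrow> real).
     0 < q \<and> q < 2 \<and> 0 < Mb \<and> (\<forall>n. 2 \<le> p n) \<and> (\<forall>n. 0 \<le> t n) \<and>
     (\<lambda>n. t n * (ln (real (p n)) / real n) powr (1 - q / 2)) \<longlonglongrightarrow> 0 \<and>
     (\<forall>n. t n * (real n / ln (real (p n))) powr (q / 2) \<le> real (p n))
     \<longrightarrow> (\<forall>n c. Nclass P (\<phi> n) (p n) (t n) q Mb link c \<longrightarrow>
              Wclass P (\<phi> n) (p n) (t n powr (1 / q)) (1 / q) Mb link c))
   \<and>
   (\<forall>(P::(real^'d::finite) measure) (f::real^'d \<Rightarrow> real) (K::real)
       (\<phi>::nat \<Rightarrow> real^'d \<Rightarrow> real) (p::nat \<Rightarrow> nat) (l::nat) (\<alpha>::real) (t::nat \<Rightarrow> real).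
     prob_space P \<and> 0 < K \<and>
     f \<in> borel_measurable (lebesgue_on unit_cube) \<and>
     P = density (lebesgue_on unit_cube) (\<lambda>z. ennreal (f z)) \<and>
     (\<forall>z\<in>unit_cube. 0 \<le> f z \<and> f z \<le> K) \<and>
     L2_onb \<phi> \<and> (\<forall>n. 2 \<le> p n) \<and>
     l \<in> {1, 2} \<and> \<alpha> > 1 / real l \<and> (\<forall>n. 0 \<le> t n) \<and>
     (\<lambda>n. t n powr (1 / \<alpha>) * (ln (real (p n)) / real n) powr (1 - 1 / (real l * \<alpha>)))
        \<longlonglongrightarrow> 0 \<and>
     (\<forall>n. t n powr (1 / \<alpha>) * (real n / ln (real (p n))) powr (1 / (real l * \<alpha>)) \<le> real (p n))
     \<longrightarrow> (\<exists>K'. \<forall>\<^sub>F n in sequentially. \<forall>c.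
            Sclass \<phi> (p n) (t n) \<alpha> c \<longrightarrow>
            AGLS P (\<lambda>z i. \<phi> i z) (p n) n
              (t n powr (1 / \<alpha>) * (real n / ln (real (p n))) powr (1 / (real l * \<alpha>)))
              (if l = 1 then 2 else 1) id K' c))"
    by (intro conjI[OF part1 conjI[OF part2 part3]])

end
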